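(* Let $f:\mathbb{R}^{d_1}\times\mathbb{R}^{d_2}\to\mathbb{R}$ satisfy: (i) for every fixed $x$, $\max_y f(x,y)$ has a nonempty solution set and a finite optimal value, and there is $\mu>0$ with $\|\nabla_y f(x,y)\|^2\geq 2\mu[\max_{y'}f(x,y')-f(x,y)]$ for all $x,y$; (ii) there is $l>0$ with $\|\nabla_x f(x_1,y_1)-\nabla_x f(x_2,y_2)\|\leq l[\|x_1-x_2\|+\|y_1-y_2\|]$ and $\|\nabla_y f(x_1,y_1)-\nabla_y f(x_2,y_2)\|\leq l[\|x_1-x_2\|+\|y_1-y_2\|]$ for all $x_1,x_2,y_1,y_2$. Let $\Phi(x)=\max_y f(x,y)$, $\kappa=l/\mu$, $L=l+\frac{l^2}{2\mu}$. Let $(x_t,y_t)$ be generated by the ZO-AGDA iteration described in the context with step sizes $\alpha,\beta>0$ and smoothing parameters $\mu_1,\mu_2>0$, and let $V_t=\frac32\Phi(x_t)-\frac12 f(x_t,y_t)$. If $\beta\leq\frac{1}{4d_2L}$ and $\alpha\leq\min\{\frac{\beta}{32\kappa^2},\frac{1}{10d_1L}\}$, then for every $t$, $$\mathbb{E}V_t-\mathbb{E}V_{t+1}\geq \frac{\alpha}{4}\mathbb{E}\|\nabla\Phi(x_t)\|^2-\frac{\theta_1}{4}\mu_1^2-\frac{3d_2^2L^2\beta}{16}\mu_2^2,$$ where $\theta_1=\left(5d_1L+\frac{3}{2\alpha}+\frac32 L+d_2L\right)d_1^2L^2\alpha^2$.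
   Context: ZO-AGDA iteration: given $(x_t,y_t)$, draw $u_t$ uniformly from the unit sphere in $\mathbb{R}^{d_1}$ and $v_t$ uniformly from the unit sphere in $\mathbb{R}^{d_2}$, independently of everything else, and set $x_{t+1}=x_t-\alpha\,\frac{f(x_t+\mu_1u_t,y_t)-f(x_t,y_t)}{\mu_1/d_1}u_t$, then $y_{t+1}=y_t+\beta\,\frac{f(x_{t+1},y_t+\mu_2v_t)-f(x_{t+1},y_t)}{\mu_2/d_2}v_t$. Expectations are over all random vectors drawn by the algorithm. $\|\cdot\|$ is the Euclidean norm. *)

theory Defs
  imports "HOL-Probability.Probability"
begin

definition grad :: "('a::euclidean_space \<Rightarrow> real) \<Rightarrow> 'a \<Rightarrow> 'a" where
  "grad g x = (THE v. (g has_derivative (\<lambda>h. v \<bullet> h)) (at x))"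

definition Phi :: "('a \<Rightarrow> 'b \<Rightarrow> real) \<Rightarrow> 'a \<Rightarrow> real" where
  "Phi f x = (SUP y. f x y)"

definition unif_sphere :: "'a::euclidean_space measure" where
  "unif_sphere = distr (uniform_measure lborel (ball 0 1)) borel (\<lambda>x. x /\<^sub>R norm x)"

definition dir_space :: "(nat \<Rightarrow> 'a::euclidean_space \<times> 'b::euclidean_space) measure" where
  "dir_space = PiM UNIV (\<lambda>_. unif_sphere \<Otimes>\<^sub>M unif_sphere)"

primrec zo_agda ::
  "('a::euclidean_space \<Rightarrow> 'b::euclidean_space \<Rightarrow> real) \<Rightarrow> real \<Rightarrow> real \<Rightarrow> real \<Rightarrow> real
   \<Rightarrow> 'a \<Rightarrow> 'b \<Rightarrow> (nat \<Rightarrow> 'a \<times> 'b) \<Rightarrow> nat \<Rightarrow> 'a \<times> 'b" where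
  "zo_agda f \<alpha> \<beta> \<mu>1 \<mu>2 x0 y0 \<omega> 0 = (x0, y0)"
| "zo_agda f \<alpha> \<beta> \<mu>1 \<mu>2 x0 y0 \<omega> (Suc t) =
    (let x = fst (zo_agda f \<alpha> \<beta> \<mu>1 \<mu>2 x0 y0 \<omega> t);
         y = snd (zo_agda f \<alpha> \<beta> \<mu>1 \<mu>2 x0 y0 \<omega> t);
         u = fst (\<omega> t); v = snd (\<omega> t);
         x' = x - (\<alpha> * ((f (x + \<mu>1 *\<^sub>R u) y - f x y) / (\<mu>1 / real DIM('a)))) *\<^sub>R u;
         y' = y + (\<beta> * ((f x' (y + \<mu>2 *\<^sub>R v) - f x' y) / (\<mu>2 / real DIM('b)))) *\<^sub>R v
     in (x', y'))"

end

theory Submission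
  imports Defs
begin


lemma grad_eqI:
  fixes g :: "'a::euclidean_space \<Rightarrow> real"
  assumes "(g has_derivative (\<lambda>h. v \<bullet> h)) (at x)"
  shows "grad g x = v"
  unfolding grad_def
proof (rule the_equality[where P="\<lambda>w. (g has_derivative (\<lambda>h. w \<bullet> h)) (at x)", OF assms])
  fix w assume "(g has_derivative (\<lambda>h. w \<bullet> h)) (at x)"
  from has_derivative_unique[OF this assms] have "\<And>h. w \<bullet> h = v \<bullet> h" by metis
  from this[of "w - v"] have "(w - v) \<bullet> (w - v) = 0" by (simp add: inner_diff_left)
  then show "w = v" by simp
qed

lemma grad_has_derivative:
  fixes g :: "'a::euclidean_space \<Rightarrow> real"
  assumes "g differentiable (at x)"
  shows "(g has_derivative (\<lambda>h. grad g x \<bullet> h)) (at x)"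
proof -
  obtain D where hD: "(g has_derivative D) (at x)" using assms by (auto simp: differentiable_def)
  then have lin: "linear D" using has_derivative_linear by blast
  define v where "v = (\<Sum>b\<in>Basis. D b *\<^sub>R b)"
  have eq: "D h = v \<bullet> h" for h
  proof -
    have "D h = D (\<Sum>b\<in>Basis. (h \<bullet> b) *\<^sub>R b)" by (simp add: euclidean_representation)
    also have "\<dots> = (\<Sum>b\<in>Basis. (h \<bullet> b) * D b)"
      using lin by (simp add: linear_sum linear_scale)
    also have "\<dots> = v \<bullet> h" unfolding v_def inner_sum_left
      by (rule sum.cong) (auto simp: inner_commute)
    finally show ?thesis .
  qed
  have "D = (\<lambda>h. v \<bullet> h)" using eq by auto
  with hD have "(g has_derivative (\<lambda>h. v \<bullet> h)) (at x)" by simp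
  moreover then have "grad g x = v" by (rule grad_eqI)
  ultimately show ?thesis by simp
qed

lemma line_deriv:
  fixes g :: "'a::euclidean_space \<Rightarrow> real"
  assumes "\<And>z. g differentiable (at z)"
  shows "((\<lambda>t. g (x + t *\<^sub>R h)) has_real_derivative (grad g (x + t *\<^sub>R h) \<bullet> h)) (at t)"
proof -
  have d1: "((\<lambda>t. x + t *\<^sub>R h) has_derivative (\<lambda>s. s *\<^sub>R h)) (at t)"
    by (auto intro!: derivative_eq_intros)
  have d2: "(g has_derivative (\<lambda>k. grad g (x + t *\<^sub>R h) \<bullet> k)) (at (x + t *\<^sub>R h))"
    using grad_has_derivative assms by blast
  have "((\<lambda>t. g (x + t *\<^sub>R h)) has_derivative (\<lambda>s. grad g (x + t *\<^sub>R h) \<bullet> (s *\<^sub>R h))) (at t)"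
    using has_derivative_compose[OF d1 d2] by (simp add: o_def)
  moreover have "(\<lambda>s. grad g (x + t *\<^sub>R h) \<bullet> (s *\<^sub>R h)) = (*) (grad g (x + t *\<^sub>R h) \<bullet> h)"
    by (auto simp: fun_eq_iff)
  ultimately show ?thesis unfolding has_field_derivative_def by simp
qed

lemma quad_bound:
  fixes g :: "'a::euclidean_space \<Rightarrow> real"
  assumes dif: "\<And>z. g differentiable (at z)"
    and lip: "\<And>z w. norm (grad g z - grad g w) \<le> l * norm (z - w)"
  shows "\<bar>g y - g x - grad g x \<bullet> (y - x)\<bar> \<le> l / 2 * (norm (y - x))\<^sup>2"
proof -
  define h where "h = y - x"
  have y: "y = x + 1 *\<^sub>R h" by (simp add: h_def)
  have cont: "continuous_on {0..1} (\<lambda>t. g (x + t *\<^sub>R h))"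
    using line_deriv[OF dif] by (meson DERIV_continuous continuous_at_imp_continuous_on)
  have key: "\<bar>(grad g (x + t *\<^sub>R h) - grad g x) \<bullet> h\<bar> \<le> l * t * (norm h)\<^sup>2" if "0 < t" for t
  proof -
    have "\<bar>(grad g (x + t *\<^sub>R h) - grad g x) \<bullet> h\<bar> \<le> norm (grad g (x + t *\<^sub>R h) - grad g x) * norm h"
      by (rule Cauchy_Schwarz_ineq2)
    also have "\<dots> \<le> l * norm (t *\<^sub>R h) * norm h"
      using lip[of "x + t *\<^sub>R h" x] by (simp add: mult_right_mono)
    also have "\<dots> = l * t * (norm h)\<^sup>2" using that by (simp add: power2_eq_square)
    finally show ?thesis .
  qed
  define c where "c = grad g x \<bullet> h"
  have up: "g (x + 1 *\<^sub>R h) - 1 * c - l * 1\<^sup>2 * (norm h)\<^sup>2 / 2 \<le> g (x + 0 *\<^sub>R h) - 0 * c - l * 0\<^sup>2 * (norm h)\<^sup>2 / 2"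
  proof (rule DERIV_nonpos_imp_decreasing_open[of 0 1 "\<lambda>t. g (x + t *\<^sub>R h) - t * c - l * t\<^sup>2 * (norm h)\<^sup>2 / 2"])
    fix t :: real assume t: "0 < t" "t < 1"
    have "((\<lambda>t. g (x + t *\<^sub>R h) - t * c - l * t\<^sup>2 * (norm h)\<^sup>2 / 2) has_real_derivative
           (grad g (x + t *\<^sub>R h) \<bullet> h - c - l * t * (norm h)\<^sup>2)) (at t)"
      by (rule derivative_eq_intros line_deriv[OF dif] refl | simp)+
    moreover have "grad g (x + t *\<^sub>R h) \<bullet> h - c - l * t * (norm h)\<^sup>2 \<le> 0"
      using key[OF t(1)] unfolding c_def by (simp add: inner_diff_left)
    ultimately show "\<exists>y. ((\<lambda>t. g (x + t *\<^sub>R h) - t * c - l * t\<^sup>2 * (norm h)\<^sup>2 / 2) has_real_derivative y) (at t) \<and> y \<le> 0"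
      by blast
  next
    show "continuous_on {0..1} (\<lambda>t. g (x + t *\<^sub>R h) - t * c - l * t\<^sup>2 * (norm h)\<^sup>2 / 2)"
      by (intro continuous_intros cont) auto
  qed simp
  have lo: "g (x + 0 *\<^sub>R h) - 0 * c + l * 0\<^sup>2 * (norm h)\<^sup>2 / 2 \<le> g (x + 1 *\<^sub>R h) - 1 * c + l * 1\<^sup>2 * (norm h)\<^sup>2 / 2"
  proof -
    have "- (g (x + 1 *\<^sub>R h) - 1 * c + l * 1\<^sup>2 * (norm h)\<^sup>2 / 2) \<le> - (g (x + 0 *\<^sub>R h) - 0 * c + l * 0\<^sup>2 * (norm h)\<^sup>2 / 2)"
    proof (rule DERIV_nonpos_imp_decreasing_open[of 0 1 "\<lambda>t. - (g (x + t *\<^sub>R h) - t * c + l * t\<^sup>2 * (norm h)\<^sup>2 / 2)"])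
      fix t :: real assume t: "0 < t" "t < 1"
      have "((\<lambda>t. - (g (x + t *\<^sub>R h) - t * c + l * t\<^sup>2 * (norm h)\<^sup>2 / 2)) has_real_derivative
             - (grad g (x + t *\<^sub>R h) \<bullet> h - c + l * t * (norm h)\<^sup>2)) (at t)"
        by (rule derivative_eq_intros line_deriv[OF dif] refl | simp)+
      moreover have "- (grad g (x + t *\<^sub>R h) \<bullet> h - c + l * t * (norm h)\<^sup>2) \<le> 0"
        using key[OF t(1)] unfolding c_def by (simp add: inner_diff_left)
      ultimately show "\<exists>y. ((\<lambda>t. - (g (x + t *\<^sub>R h) - t * c + l * t\<^sup>2 * (norm h)\<^sup>2 / 2)) has_real_derivative y) (at t) \<and> y \<le> 0"
        by blast
    next
      show "continuous_on {0..1} (\<lambda>t. - (g (x + t *\<^sub>R h) - t * c + l * t\<^sup>2 * (norm h)\<^sup>2 / 2))"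
        by (intro continuous_intros cont) auto
    qed simp
    then show ?thesis by simp
  qed
  have y1: "x + 1 *\<^sub>R h = y" by (simp add: h_def)
  have "g y - c - l * (norm h)\<^sup>2 / 2 \<le> g x" "g x \<le> g y - c + l * (norm h)\<^sup>2 / 2"
    using up lo unfolding y1 by simp_all
  then show ?thesis unfolding c_def h_def abs_le_iff by linarith
qed



abbreviation Ub :: "'a::euclidean_space measure" where
  "Ub \<equiv> uniform_measure lborel (ball 0 1)"

lemma sets_unif_sphere[measurable_cong, simp]: "sets (unif_sphere :: 'a::euclidean_space measure) = sets borel"
  by (simp add: unif_sphere_def)

lemma space_unif_sphere[simp]: "space (unif_sphere :: 'a::euclidean_space measure) = UNIV"
  by (simp add: unif_sphere_def)

lemma measurable_unif_sphere_iff[simp]: "measurable (unif_sphere :: 'a::euclidean_space measure) N = measurable borel N"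
  by (rule measurable_cong_sets) simp_all

lemma nrm_measurable[measurable]: "(\<lambda>x::'a::euclidean_space. x /\<^sub>R norm x) \<in> borel_measurable borel"
  by measurable

lemma ball_pos: "emeasure lborel (ball (0::'a::euclidean_space) 1) \<noteq> 0"
proof -
  have h: "0 < unit_ball_vol (real DIM('a))" by (rule unit_ball_vol_pos) simp
  have "emeasure lborel (ball (0::'a) 1) = ennreal (unit_ball_vol (real DIM('a)))"
    by (simp add: emeasure_ball)
  then show ?thesis using h by (metis ennreal_eq_0_iff not_le)
qed

lemma ball_fin: "emeasure lborel (ball (0::'a::euclidean_space) 1) \<noteq> \<infinity>"
  using emeasure_lborel_ball_finite[of "0::'a" 1] by (simp add: less_top)

lemma prob_space_Ub: "prob_space (Ub :: 'a::euclidean_space measure)"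
  by (rule prob_space_uniform_measure) (use ball_pos ball_fin in auto)

lemma prob_space_unif_sphere: "prob_space (unif_sphere :: 'a::euclidean_space measure)"
  unfolding unif_sphere_def
  by (rule prob_space.prob_space_distr[OF prob_space_Ub]) simp

lemma AE_sphere_norm: "AE u in (unif_sphere :: 'a::euclidean_space measure). norm u = 1"
proof -
  have "AE x in (Ub :: 'a measure). x \<noteq> 0"
    by (rule AE_uniform_measureI) (auto intro: AE_mp[OF AE_lborel_singleton[of 0]])
  then have "AE x in (Ub :: 'a measure). norm (x /\<^sub>R norm x) = 1"
    by eventually_elim simp
  then show ?thesis unfolding unif_sphere_def
    by (subst AE_distr_iff) auto
qed

lemma AE_sphere_le: "AE u in (unif_sphere :: 'a::euclidean_space measure). u \<in> cball 0 1"
  using AE_sphere_norm by eventually_elim simp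

lemma integrable_sphere_cont:
  fixes F :: "'a::euclidean_space \<Rightarrow> real"
  assumes "continuous_on UNIV F"
  shows "integrable unif_sphere F"
proof -
  interpret prob_space "unif_sphere :: 'a measure" by (rule prob_space_unif_sphere)
  have "compact (F ` cball 0 1)"
    by (rule compact_continuous_image) (use assms continuous_on_subset in auto)
  then obtain B where B: "\<And>u. u \<in> cball 0 1 \<Longrightarrow> norm (F u) \<le> B"
    by (meson bounded_iff compact_imp_bounded imageI)
  show ?thesis
  proof (rule integrable_const_bound)
    show "AE x in unif_sphere. norm (F x) \<le> B" using AE_sphere_le by eventually_elim (use B in auto)
    show "F \<in> borel_measurable unif_sphere" using borel_measurable_continuous_onI[OF assms] by simp
  qed
qed

lemma distr_Ub_invariant:
  fixes T :: "'a::euclidean_space \<Rightarrow> 'a"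
  assumes lin: "linear T" and nT: "\<And>x. norm (T x) = norm x" and dT: "distr lborel borel T = lborel"
  shows "distr Ub borel T = Ub"
proof -
  have Tm[measurable]: "T \<in> borel_measurable borel"
    using lin by (simp add: borel_measurable_continuous_onI linear_continuous_on linear_conv_bounded_linear)
  define g where "g = (\<lambda>x::'a. indicator (ball 0 1) x / emeasure lborel (ball (0::'a) 1))"
  have [measurable]: "ball (0::'a) 1 \<in> sets borel" by simp
  have c: "(\<lambda>x::'a. emeasure lborel (ball (0::'a) 1)) \<in> borel_measurable borel" by (rule measurable_const) simp
  have gm[measurable]: "g \<in> borel_measurable borel" unfolding g_def
    by (rule borel_measurable_divide_ennreal[OF borel_measurable_indicator c]) simp
  have gT: "g (T x) = g x" for x unfolding g_def by (simp add: indicator_def nT)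
  have "density (distr lborel borel T) g = distr (density lborel (\<lambda>x. g (T x))) borel T"
    by (rule density_distr) simp_all
  moreover have "(\<lambda>x. g (T x)) = g" using gT by (rule ext)
  ultimately have "distr (density lborel g) borel T = density lborel g"
    using dT by simp
  moreover have "(Ub::'a measure) = density lborel g" unfolding uniform_measure_def g_def ..
  ultimately show ?thesis by simp
qed

lemma distr_sphere_invariant:
  fixes T :: "'a::euclidean_space \<Rightarrow> 'a"
  assumes lin: "linear T" and nT: "\<And>x. norm (T x) = norm x" and dT: "distr lborel borel T = lborel"
  shows "distr unif_sphere borel T = unif_sphere"
proof -
  have Tm[measurable]: "T \<in> borel_measurable borel"
    using lin by (simp add: borel_measurable_continuous_onI linear_continuous_on linear_conv_bounded_linear)
  have comm: "T \<circ> (\<lambda>x. x /\<^sub>R norm x) = (\<lambda>x. x /\<^sub>R norm x) \<circ> T"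
    by (auto simp: fun_eq_iff nT linear_scale[OF lin])
  have "distr unif_sphere borel T = distr (Ub::'a measure) borel (T \<circ> (\<lambda>x. x /\<^sub>R norm x))"
    unfolding unif_sphere_def by (subst distr_distr) auto
  also have "\<dots> = distr (distr (Ub::'a measure) borel T) borel (\<lambda>x. x /\<^sub>R norm x)"
    unfolding comm by (subst distr_distr) auto
  also have "\<dots> = unif_sphere" unfolding distr_Ub_invariant[OF assms] unif_sphere_def ..
  finally show ?thesis .
qed

lemma integral_sphere_invariant:
  fixes T :: "'a::euclidean_space \<Rightarrow> 'a" and F :: "'a \<Rightarrow> real"
  assumes lin: "linear T" and nT: "\<And>x. norm (T x) = norm x" and dT: "distr lborel borel T = lborel"
    and Fm: "F \<in> borel_measurable borel"
  shows "(\<integral>u. F (T u) \<partial>unif_sphere) = (\<integral>u. F u \<partial>unif_sphere)"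
proof -
  have Tm[measurable]: "T \<in> borel_measurable borel"
    using lin by (simp add: borel_measurable_continuous_onI linear_continuous_on linear_conv_bounded_linear)
  have "(\<integral>u. F u \<partial>unif_sphere) = (\<integral>u. F u \<partial>distr unif_sphere borel T)"
    unfolding distr_sphere_invariant[OF assms(1-3)] ..
  also have "\<dots> = (\<integral>u. F (T u) \<partial>unif_sphere)"
    by (rule integral_distr) (use Fm in auto)
  finally show ?thesis ..
qed


definition reflT :: "'a::euclidean_space \<Rightarrow> 'a \<Rightarrow> 'a" where
  "reflT i x = x - (2 * (x \<bullet> i)) *\<^sub>R i"

lemma reflT_linear: "linear (reflT i)"
  unfolding reflT_def by (rule linearI) (auto simp: algebra_simps inner_add_left)

lemma reflT_norm: assumes "i \<in> Basis" shows "norm (reflT i x) = norm x"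
proof -
  have "(reflT i x) \<bullet> (reflT i x) = x \<bullet> x"
    unfolding reflT_def using assms by (simp add: inner_diff_left inner_diff_right algebra_simps inner_commute)
  then show ?thesis by (simp add: norm_eq_sqrt_inner)
qed

lemma reflT_inner: assumes "i \<in> Basis" "j \<in> Basis"
  shows "reflT i x \<bullet> j = (if j = i then - (x \<bullet> i) else x \<bullet> j)"
  unfolding reflT_def using assms by (auto simp: inner_diff_left inner_Basis)

lemma reflT_distr: assumes i: "i \<in> Basis" shows "distr lborel borel (reflT i) = lborel"
proof -
  define c where "c = (\<lambda>j::'a. if j = i then -1 else (1::real))"
  have eq: "(\<lambda>x. 0 + (\<Sum>j\<in>Basis. (c j * (x \<bullet> j)) *\<^sub>R j)) = reflT i"
  proof
    fix x :: 'a
    have "(\<Sum>j\<in>Basis. (c j * (x \<bullet> j)) *\<^sub>R j) = (\<Sum>j\<in>Basis. (x \<bullet> j) *\<^sub>R j - (if j = i then (2 * (x \<bullet> i)) *\<^sub>R i else 0))"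
      by (rule sum.cong) (auto simp: c_def algebra_simps, metis mult_2_right scaleR_add_left mult.commute)
    also have "\<dots> = x - (2 * (x \<bullet> i)) *\<^sub>R i"
      using i by (simp add: sum_subtractf euclidean_representation)
    finally show "0 + (\<Sum>j\<in>Basis. (c j * (x \<bullet> j)) *\<^sub>R j) = reflT i x" by (simp add: reflT_def)
  qed
  have "lborel = density (distr lborel borel (\<lambda>x. 0 + (\<Sum>j\<in>Basis. (c j * (x \<bullet> j)) *\<^sub>R j))) (\<lambda>_. (\<Prod>j\<in>Basis. \<bar>c j\<bar>))"
    by (rule lborel_affine_euclidean) (simp add: c_def)
  moreover have "(\<Prod>j\<in>Basis. \<bar>c j\<bar>) = 1" by (rule prod.neutral) (simp add: c_def)
  ultimately show ?thesis unfolding eq by (simp add: density_1)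
qed

definition swp :: "'a \<Rightarrow> 'a \<Rightarrow> 'a \<Rightarrow> 'a" where
  "swp i k b = (if b = i then k else if b = k then i else b)"

definition swapT :: "'a::euclidean_space \<Rightarrow> 'a \<Rightarrow> 'a \<Rightarrow> 'a" where
  "swapT i k x = (\<Sum>b\<in>Basis. (x \<bullet> swp i k b) *\<^sub>R b)"

lemma swp_inv: "swp i k (swp i k b) = b" by (auto simp: swp_def)

lemma swp_Basis: assumes "i \<in> Basis" "k \<in> Basis" "b \<in> Basis" shows "swp i k b \<in> Basis"
  using assms by (auto simp: swp_def)

lemma swp_bij: assumes "i \<in> Basis" "k \<in> Basis" shows "bij_betw (swp i k) Basis Basis"
  by (rule bij_betwI[where g="swp i k"]) (use assms swp_Basis swp_inv in auto)

lemma swapT_inner: assumes "b \<in> Basis" shows "swapT i k x \<bullet> b = x \<bullet> swp i k b"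
  unfolding swapT_def inner_sum_left using assms
  by (simp add: inner_Basis if_distrib[of "\<lambda>t. _ * t"] cong: if_cong)

lemma swapT_linear: "linear (swapT i k)"
  unfolding swapT_def
  by (rule linearI) (auto simp: inner_add_left scaleR_add_left sum.distrib scaleR_sum_right)

lemma swapT_norm: assumes "i \<in> Basis" "k \<in> Basis" shows "norm (swapT i k x) = norm x"
proof -
  have "swapT i k x \<bullet> swapT i k x = (\<Sum>b\<in>Basis. (x \<bullet> swp i k b) * (x \<bullet> swp i k b))"
    by (subst euclidean_inner) (simp add: swapT_inner)
  also have "\<dots> = (\<Sum>b\<in>Basis. (x \<bullet> b) * (x \<bullet> b))"
    by (rule sum.reindex_bij_betw[OF swp_bij[OF assms], where g="\<lambda>b. (x \<bullet> b) * (x \<bullet> b)"])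
  also have "\<dots> = x \<bullet> x" by (simp add: euclidean_inner[of x x])
  finally show ?thesis by (simp add: norm_eq_sqrt_inner)
qed

lemma swapT_distr: assumes i: "i \<in> Basis" and k: "k \<in> Basis" shows "distr lborel borel (swapT i k) = lborel"
proof (rule lborel_eqI[symmetric])
  have "bounded_linear (swapT i k)" using swapT_linear[of i k] by (simp add: linear_conv_bounded_linear)
  then have Tm[measurable]: "swapT i k \<in> borel_measurable borel"
    by (intro borel_measurable_continuous_onI linear_continuous_on)
  show "sets (distr lborel borel (swapT i k)) = sets borel" by simp
  fix l u :: 'a assume lu: "\<And>b. b \<in> Basis \<Longrightarrow> l \<bullet> b \<le> u \<bullet> b"
  have pre: "swapT i k -` box l u = box (swapT i k l) (swapT i k u)"
  proof (intro set_eqI iffI)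
    fix x assume "x \<in> swapT i k -` box l u"
    then have h: "\<And>b. b \<in> Basis \<Longrightarrow> l \<bullet> b < x \<bullet> swp i k b \<and> x \<bullet> swp i k b < u \<bullet> b"
      by (auto simp: mem_box swapT_inner)
    show "x \<in> box (swapT i k l) (swapT i k u)"
      unfolding mem_box
    proof (intro ballI conjI)
      fix b :: 'a assume b: "b \<in> Basis"
      from h[OF swp_Basis[OF i k b]] show "swapT i k l \<bullet> b < x \<bullet> b" "x \<bullet> b < swapT i k u \<bullet> b"
        using b by (simp_all add: swapT_inner swp_inv)
    qed
  next
    fix x assume "x \<in> box (swapT i k l) (swapT i k u)"
    then have h: "\<And>b. b \<in> Basis \<Longrightarrow> l \<bullet> swp i k b < x \<bullet> b \<and> x \<bullet> b < u \<bullet> swp i k b"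
      by (auto simp: mem_box swapT_inner)
    show "x \<in> swapT i k -` box l u"
      unfolding vimage_eq mem_box
    proof (intro ballI conjI)
      fix b :: 'a assume b: "b \<in> Basis"
      from h[OF swp_Basis[OF i k b]] show "l \<bullet> b < swapT i k x \<bullet> b" "swapT i k x \<bullet> b < u \<bullet> b"
        using b by (simp_all add: swapT_inner swp_inv)
    qed
  qed
  have cond: "\<forall>b\<in>Basis. swapT i k l \<bullet> b \<le> swapT i k u \<bullet> b"
    using lu swp_Basis[OF i k] by (simp add: swapT_inner)
  have "emeasure (distr lborel borel (swapT i k)) (box l u) = emeasure lborel (swapT i k -` box l u)"
    by (subst emeasure_distr) auto
  also have "\<dots> = ennreal (\<Prod>b\<in>Basis. (swapT i k u - swapT i k l) \<bullet> b)"
    unfolding pre emeasure_lborel_box_eq using cond by simp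
  also have "(\<Prod>b\<in>Basis. (swapT i k u - swapT i k l) \<bullet> b) = (\<Prod>b\<in>Basis. (u - l) \<bullet> swp i k b)"
    by (rule prod.cong) (auto simp: inner_diff_left swapT_inner)
  also have "\<dots> = (\<Prod>b\<in>Basis. (u - l) \<bullet> b)"
    by (rule prod.reindex_bij_betw[OF swp_bij[OF i k], where g="\<lambda>b. (u - l) \<bullet> b"])
  finally show "emeasure (distr lborel borel (swapT i k)) (box l u) = ennreal (\<Prod>b\<in>Basis. (u - l) \<bullet> b)" .
qed

definition mom :: "'a::euclidean_space \<Rightarrow> 'a \<Rightarrow> real" where
  "mom i j = (\<integral>u. (u \<bullet> i) * (u \<bullet> j) \<partial>unif_sphere)"

lemma mom_off: assumes "i \<in> Basis" "j \<in> Basis" "i \<noteq> j" shows "mom i j = 0"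
proof -
  have "mom i j = (\<integral>u. (reflT i u \<bullet> i) * (reflT i u \<bullet> j) \<partial>unif_sphere)"
    unfolding mom_def
    by (rule integral_sphere_invariant[OF reflT_linear reflT_norm[OF assms(1)] reflT_distr[OF assms(1)], symmetric]) simp
  also have "\<dots> = (\<integral>u. - ((u \<bullet> i) * (u \<bullet> j)) \<partial>unif_sphere)"
    using assms by (simp add: reflT_inner)
  also have "\<dots> = - mom i j" unfolding mom_def by simp
  finally show ?thesis by simp
qed

lemma mom_diag_eq: fixes i k :: "'a::euclidean_space" assumes "i \<in> Basis" "k \<in> Basis" shows "mom k k = mom i i"
proof -
  have "mom i i = (\<integral>u. (swapT i k u \<bullet> i) * (swapT i k u \<bullet> i) \<partial>unif_sphere)"
    unfolding mom_def
    by (rule integral_sphere_invariant[OF swapT_linear swapT_norm[OF assms] swapT_distr[OF assms], symmetric]) simp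
  also have "\<dots> = mom k k" unfolding mom_def using assms by (simp add: swapT_inner swp_def)
  finally show ?thesis by simp
qed

lemma integrable_mom: "integrable unif_sphere (\<lambda>u::'a::euclidean_space. (u \<bullet> i) * (u \<bullet> j))"
  by (rule integrable_sphere_cont) (intro continuous_intros)

lemma mom_sum: "(\<Sum>i\<in>(Basis::'a::euclidean_space set). mom i i) = 1"
proof -
  interpret prob_space "unif_sphere :: 'a measure" by (rule prob_space_unif_sphere)
  have "(\<Sum>i\<in>(Basis::'a set). mom i i) = (\<integral>u. (\<Sum>i\<in>(Basis::'a set). (u \<bullet> i) * (u \<bullet> i)) \<partial>unif_sphere)"
    unfolding mom_def by (subst Bochner_Integration.integral_sum) (auto intro: integrable_mom)
  also have "\<dots> = (\<integral>u. 1 \<partial>(unif_sphere :: 'a measure))"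
  proof (rule integral_cong_AE)
    show "AE u in unif_sphere. (\<Sum>i\<in>(Basis::'a set). (u \<bullet> i) * (u \<bullet> i)) = 1"
      using AE_sphere_norm
    proof eventually_elim
      case (elim u)
      then have "u \<bullet> u = 1" by (simp add: norm_eq_sqrt_inner)
      then show ?case by (simp add: euclidean_inner[of u u])
    qed
  qed (use integrable_mom in auto)
  also have "\<dots> = 1" using prob_space by simp
  finally show ?thesis .
qed

lemma mom_diag: assumes "i \<in> (Basis::'a::euclidean_space set)" shows "mom i i = 1 / real DIM('a)"
proof -
  have "(\<Sum>k\<in>(Basis::'a set). mom k k) = (\<Sum>k\<in>(Basis::'a set). mom i i)"
    by (rule sum.cong) (use mom_diag_eq assms in auto)
  then have "real DIM('a) * mom i i = 1" using mom_sum[where 'a='a] by simp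
  then show ?thesis by (simp add: field_simps)
qed

lemma sphere_second_moment:
  fixes p q :: "'a::euclidean_space"
  shows "(\<integral>u. (p \<bullet> u) * (q \<bullet> u) \<partial>unif_sphere) = (p \<bullet> q) / real DIM('a)"
proof -
  have eq: "(p \<bullet> u) * (q \<bullet> u) = (\<Sum>i\<in>Basis. \<Sum>j\<in>Basis. ((p \<bullet> i) * (q \<bullet> j)) * ((u \<bullet> i) * (u \<bullet> j)))" for u
    by (simp add: euclidean_inner[of p u] euclidean_inner[of q u] sum_product algebra_simps)
  have "(\<integral>u. (p \<bullet> u) * (q \<bullet> u) \<partial>unif_sphere)
      = (\<Sum>i\<in>Basis. \<Sum>j\<in>Basis. ((p \<bullet> i) * (q \<bullet> j)) * mom i j)"
    unfolding eq mom_def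
    apply (subst Bochner_Integration.integral_sum)
     apply (auto intro!: integrable_sum integrable_mult_right integrable_mom)[1]
    apply (rule sum.cong[OF refl])
    apply (subst Bochner_Integration.integral_sum)
     apply (auto intro!: integrable_sum integrable_mult_right integrable_mom)[1]
    apply (rule sum.cong[OF refl])
    apply simp
    done
  also have "\<dots> = (\<Sum>i\<in>(Basis::'a set). ((p \<bullet> i) * (q \<bullet> i)) * mom i i)"
  proof (rule sum.cong[OF refl])
    fix i :: 'a assume i: "i \<in> Basis"
    have "(\<Sum>j\<in>Basis. ((p \<bullet> i) * (q \<bullet> j)) * mom i j) = (\<Sum>j\<in>Basis. if j = i then ((p \<bullet> i) * (q \<bullet> i)) * mom i i else 0)"
      by (rule sum.cong) (use mom_off i in auto)
    also have "\<dots> = ((p \<bullet> i) * (q \<bullet> i)) * mom i i" using i by simp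
    finally show "(\<Sum>j\<in>Basis. ((p \<bullet> i) * (q \<bullet> j)) * mom i j) = ((p \<bullet> i) * (q \<bullet> i)) * mom i i" .
  qed
  also have "\<dots> = (\<Sum>i\<in>(Basis::'a set). ((p \<bullet> i) * (q \<bullet> i)) / real DIM('a))"
    by (rule sum.cong) (auto simp: mom_diag)
  also have "\<dots> = (p \<bullet> q) / real DIM('a)"
    by (simp add: euclidean_inner[of p q] sum_divide_distrib)
  finally show ?thesis .
qed



lemma step_sqrt_ineq:
  fixes A B n eta s :: real
  assumes "0 \<le> B" "B \<le> A - 11/12 * eta * n\<^sup>2" "2 * mu * A \<le> n\<^sup>2" "s = sqrt (2 * mu)" "mu > 0" "eta > 0" "n \<ge> 0"
  shows "eta * n \<le> 24 / (11 * s) * (sqrt A - sqrt B)"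
proof -
  have s: "s > 0" "s\<^sup>2 = 2 * mu" using assms by auto
  have en: "0 \<le> eta * n\<^sup>2" using assms by simp
  have A0: "A \<ge> 0" using assms en by linarith
  define p where "p = sqrt A" define q where "q = sqrt B"
  have p: "p \<ge> 0" "p\<^sup>2 = A" using A0 by (auto simp: p_def)
  have q: "q \<ge> 0" "q\<^sup>2 = B" using assms by (auto simp: q_def)
  have pq: "q \<le> p" unfolding p_def q_def using assms en by (intro real_sqrt_le_mono) linarith
  have sp: "s * p \<le> n"
  proof -
    have "(s * p)\<^sup>2 \<le> n\<^sup>2" using s p assms by (simp add: power_mult_distrib)
    then show ?thesis using assms s p by (meson mult_nonneg_nonneg power2_le_imp_le less_imp_le)
  qed
  have "(p - q) * (p + q) \<ge> 11/12 * eta * n\<^sup>2"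
    using p q assms by (simp add: algebra_simps power2_eq_square)
  moreover have "(p - q) * (p + q) \<le> (p - q) * (2 * n / s)"
  proof (rule mult_left_mono)
    have "p + q \<le> 2 * p" using pq by simp
    also have "\<dots> \<le> 2 * n / s" using sp s by (simp add: field_simps)
    finally show "p + q \<le> 2 * n / s" .
  qed (use pq in simp)
  ultimately have "11/12 * eta * n\<^sup>2 \<le> (p - q) * (2 * n / s)" by linarith
  then have "11/12 * eta * n * n * s \<le> (p - q) * 2 * n"
    using s by (simp add: field_simps power2_eq_square)
  then have "n * (11/12 * eta * n * s) \<le> n * ((p - q) * 2)" by (simp add: algebra_simps)
  then have "n = 0 \<or> 11/12 * eta * n * s \<le> (p - q) * 2"
    using assms(7) by (metis mult_le_cancel_left_pos order_less_le)
  then show ?thesis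
  proof
    assume "n = 0" then show ?thesis using pq s unfolding p_def q_def by simp
  next
    assume h: "11/12 * eta * n * s \<le> (p - q) * 2"
    then show ?thesis unfolding p_def[symmetric] q_def[symmetric] using s
      by (simp add: field_simps)
  qed
qed

lemma error_bound:
  fixes g :: "'b::euclidean_space \<Rightarrow> real"
  assumes dif: "\<And>z. g differentiable (at z)"
    and lip: "\<And>z w. norm (grad g z - grad g w) \<le> l * norm (z - w)"
    and l: "l > 0" and mu: "mu > 0"
    and bnd: "\<And>z. g z \<le> m"
    and PL: "\<And>z. (norm (grad g z))\<^sup>2 \<ge> 2 * mu * (m - g z)"
  shows "\<exists>z. g z = m \<and> norm (y - z) \<le> 12 / 11 * norm (grad g y) / mu"
proof -
  define eta where "eta = 1 / (6 * l)"
  have eta: "eta > 0" "l * eta = 1/6" using l by (auto simp: eta_def)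
  define F where "F = (\<lambda>z. z + eta *\<^sub>R grad g z)"
  define Y where "Y = (\<lambda>k. (F ^^ k) y)"
  have Y0: "Y 0 = y" and YS: "\<And>k. Y (Suc k) = Y k + eta *\<^sub>R grad g (Y k)"
    by (simp_all add: Y_def F_def)
  define a where "a = (\<lambda>k. m - g (Y k))"
  have a0: "\<And>k. a k \<ge> 0" using bnd by (simp add: a_def)
  have S1: "a (Suc k) \<le> a k - 11/12 * eta * (norm (grad g (Y k)))\<^sup>2" for k
  proof -
    have qb: "\<bar>g (Y (Suc k)) - g (Y k) - grad g (Y k) \<bullet> (Y (Suc k) - Y k)\<bar> \<le> l / 2 * (norm (Y (Suc k) - Y k))\<^sup>2"
      by (rule quad_bound[OF dif lip])
    have "grad g (Y k) \<bullet> (Y (Suc k) - Y k) = eta * (norm (grad g (Y k)))\<^sup>2"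
      by (simp add: YS power2_norm_eq_inner)
    moreover have "l / 2 * (norm (Y (Suc k) - Y k))\<^sup>2 = (l * eta) * eta / 2 * (norm (grad g (Y k)))\<^sup>2"
      using eta by (simp add: YS power_mult_distrib power2_eq_square)
    moreover have "(l * eta) * eta / 2 * (norm (grad g (Y k)))\<^sup>2 = 1/12 * (eta * (norm (grad g (Y k)))\<^sup>2)"
      using eta by (simp add: mult.commute)
    ultimately have "g (Y (Suc k)) \<ge> g (Y k) + eta * (norm (grad g (Y k)))\<^sup>2 - 1/12 * (eta * (norm (grad g (Y k)))\<^sup>2)"
      using qb unfolding abs_le_iff by linarith
    then show ?thesis by (simp add: a_def)
  qed
  have S2: "2 * mu * a k \<le> (norm (grad g (Y k)))\<^sup>2" for k using PL by (simp add: a_def)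
  define s where "s = sqrt (2 * mu)"
  have s: "s > 0" "s\<^sup>2 = 2 * mu" using mu by (auto simp: s_def)
  define K where "K = 24 / (11 * s)"
  have K: "K > 0" using s by (simp add: K_def)
  have step: "norm (Y (Suc k) - Y k) \<le> K * (sqrt (a k) - sqrt (a (Suc k)))" for k
  proof -
    have "norm (Y (Suc k) - Y k) = eta * norm (grad g (Y k))" using eta by (simp add: YS)
    also have "\<dots> \<le> K * (sqrt (a k) - sqrt (a (Suc k)))" unfolding K_def
      by (rule step_sqrt_ineq[OF a0 S1 S2 s_def mu eta(1)]) simp
    finally show ?thesis .
  qed
  have adec: "a (Suc k) \<le> a k" for k
  proof -
    have "0 \<le> eta * (norm (grad g (Y k)))\<^sup>2" using eta by simp
    then show ?thesis using S1[of k] by linarith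
  qed
  have tele: "norm (Y k - Y n) \<le> K * (sqrt (a n) - sqrt (a k))" if "n \<le> k" for n k
    using that
  proof (induction k rule: dec_induct)
    case base then show ?case by simp
  next
    case (step k)
    have "norm (Y (Suc k) - Y n) \<le> norm (Y (Suc k) - Y k) + norm (Y k - Y n)"
      by (rule norm_diff_triangle_le[where y="Y k"]) simp_all
    also have "\<dots> \<le> K * (sqrt (a k) - sqrt (a (Suc k))) + K * (sqrt (a n) - sqrt (a k))"
      using step.IH \<open>\<And>k. norm (Y (Suc k) - Y k) \<le> K * (sqrt (a k) - sqrt (a (Suc k)))\<close> by (simp add: add_mono)
    finally show ?case by (simp add: algebra_simps)
  qed
  have tele2: "norm (Y k - Y n) \<le> K * sqrt (a n)" if "n \<le> k" for n k
  proof -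
    have "0 \<le> K * sqrt (a k)" using K a0[of k] by simp
    then show ?thesis using tele[OF that] by (simp add: right_diff_distrib)
  qed
  define rho where "rho = max 0 (1 - 11/12 * eta * 2 * mu)"
  have rho: "0 \<le> rho" "rho < 1" using eta mu by (auto simp: rho_def)
  have ageo: "a k \<le> rho ^ k * a 0" for k
  proof (induction k)
    case 0 then show ?case by simp
  next
    case (Suc k)
    have "11/12 * eta * (2 * mu * a k) \<le> 11/12 * eta * (norm (grad g (Y k)))\<^sup>2"
      using S2[of k] eta by (intro mult_left_mono) auto
    then have "a (Suc k) \<le> a k - 11/12 * eta * (2 * mu * a k)"
      using S1[of k] by linarith
    also have "\<dots> = (1 - 11/12 * eta * 2 * mu) * a k" by (simp add: algebra_simps)
    also have "\<dots> \<le> rho * a k" unfolding rho_def using a0[of k] by (simp add: mult_right_mono)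
    also have "\<dots> \<le> rho * (rho ^ k * a 0)" using Suc rho by (simp add: mult_left_mono)
    finally show ?case by simp
  qed
  have alim: "a \<longlonglongrightarrow> 0"
  proof (rule tendsto_sandwich[where f="\<lambda>_. 0" and h="\<lambda>k. rho ^ k * a 0"])
    show "\<forall>\<^sub>F n in sequentially. 0 \<le> a n" using a0 by simp
    show "\<forall>\<^sub>F n in sequentially. a n \<le> rho ^ n * a 0" using ageo by simp
    show "(\<lambda>k. rho ^ k * a 0) \<longlonglongrightarrow> 0"
      using LIMSEQ_power_zero[of rho] rho by (auto intro: tendsto_mult_left_zero)
  qed simp
  have sqlim: "(\<lambda>k. 2 * K * sqrt (a k)) \<longlonglongrightarrow> 0"
    using tendsto_real_sqrt[OF alim] by (auto intro: tendsto_mult_right_zero)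
  have "Cauchy Y"
  proof (rule metric_CauchyI)
    fix e :: real assume "e > 0"
    then obtain M where M: "\<And>k. k \<ge> M \<Longrightarrow> \<bar>2 * K * sqrt (a k)\<bar> < e"
      using sqlim by (metis LIMSEQ_iff diff_zero real_norm_def)
    show "\<exists>M. \<forall>m\<ge>M. \<forall>n\<ge>M. dist (Y m) (Y n) < e"
    proof (intro exI allI impI)
      fix m n assume mn: "m \<ge> M" "n \<ge> M"
      have "dist (Y m) (Y n) \<le> norm (Y m - Y M) + norm (Y n - Y M)"
        unfolding dist_norm by (metis norm_diff_triangle_le norm_minus_commute order_refl)
      also have "\<dots> \<le> 2 * K * sqrt (a M)" using tele2[OF mn(1)] tele2[OF mn(2)] by simp
      also have "\<dots> < e" using M[of M] by simp
      finally show "dist (Y m) (Y n) < e" .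
    qed
  qed
  then obtain z where z: "Y \<longlonglongrightarrow> z" using Cauchy_convergent_iff convergent_def by blast
  have "(\<lambda>k. g (Y k)) \<longlonglongrightarrow> g z"
  proof -
    have "isCont g z" using dif[of z] by (simp add: differentiable_imp_continuous_within)
    then show ?thesis using z by (rule isCont_tendsto_compose)
  qed
  moreover have "(\<lambda>k. g (Y k)) \<longlonglongrightarrow> m"
  proof -
    have "(\<lambda>k. m - a k) \<longlonglongrightarrow> m - 0" by (intro tendsto_intros alim)
    then show ?thesis by (simp add: a_def)
  qed
  ultimately have gz: "g z = m" using LIMSEQ_unique by blast
  have "(\<lambda>k. norm (Y k - Y 0)) \<longlonglongrightarrow> norm (z - Y 0)" by (intro tendsto_intros z)
  then have "norm (z - Y 0) \<le> K * sqrt (a 0)"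
    by (rule LIMSEQ_le_const2) (use tele2 in auto)
  also have "\<dots> \<le> 12 / 11 * norm (grad g y) / mu"
  proof -
    have "(s * sqrt (a 0))\<^sup>2 \<le> (norm (grad g y))\<^sup>2" using S2[of 0] s a0[of 0]
      by (simp add: power_mult_distrib Y0)
    then have "s * sqrt (a 0) \<le> norm (grad g y)"
      using s by (meson norm_ge_zero power2_le_imp_le)
    then have "K * sqrt (a 0) \<le> 24 / (11 * s) * (norm (grad g y) / s)"
      unfolding K_def using s by (simp add: field_simps)
    also have "\<dots> = 24 / 11 * norm (grad g y) / s\<^sup>2" by (simp add: power2_eq_square)
    also have "\<dots> = 12 / 11 * norm (grad g y) / mu" using s mu by (simp add: field_simps)
    finally show ?thesis .
  qed
  finally show ?thesis using gz Y0 by (auto simp: norm_minus_commute)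
qed



locale minmax =
  fixes f :: "'a::euclidean_space \<Rightarrow> 'b::euclidean_space \<Rightarrow> real" and \<mu> l :: real
  assumes diff_x: "\<And>x y. (\<lambda>x'. f x' y) differentiable (at x)"
    and diff_y: "\<And>x y. (\<lambda>y'. f x y') differentiable (at y)"
    and max_attained: "\<And>x. \<exists>y. \<forall>y'. f x y' \<le> f x y"
    and mu_pos: "\<mu> > 0"
    and PL: "\<And>x y. (norm (grad (\<lambda>y'. f x y') y))\<^sup>2 \<ge> 2 * \<mu> * (Phi f x - f x y)"
    and l_pos: "l > 0"
    and lip_x: "\<And>x1 x2 y1 y2. norm (grad (\<lambda>x. f x y1) x1 - grad (\<lambda>x. f x y2) x2)
                   \<le> l * (norm (x1 - x2) + norm (y1 - y2))"
    and lip_y: "\<And>x1 x2 y1 y2. norm (grad (\<lambda>y. f x1 y) y1 - grad (\<lambda>y. f x2 y) y2)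
                   \<le> l * (norm (x1 - x2) + norm (y1 - y2))"
begin

definition gx where "gx x y = grad (\<lambda>x. f x y) x"
definition gy where "gy x y = grad (\<lambda>y. f x y) y"

definition cEB :: real where "cEB = 12 / 11"

lemma gx_lip: "norm (gx x1 y1 - gx x2 y2) \<le> l * (norm (x1 - x2) + norm (y1 - y2))"
  unfolding gx_def by (rule lip_x)
lemma gy_lip: "norm (gy x1 y1 - gy x2 y2) \<le> l * (norm (x1 - x2) + norm (y1 - y2))"
  unfolding gy_def by (rule lip_y)

lemma gy_PL: "(norm (gy x y))\<^sup>2 \<ge> 2 * \<mu> * (Phi f x - f x y)"
  unfolding gy_def by (rule PL)

lemma Phi_eq: assumes "\<forall>y'. f x y' \<le> f x y" shows "Phi f x = f x y"
  unfolding Phi_def using assms by (intro cSup_eq_maximum) auto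

lemma le_Phi: "f x y \<le> Phi f x"
proof -
  obtain z where z: "\<forall>y'. f x y' \<le> f x z" using max_attained by blast
  then show ?thesis using Phi_eq[OF z] z by simp
qed

lemma quad_x: "\<bar>f x' y - f x y - gx x y \<bullet> (x' - x)\<bar> \<le> l / 2 * (norm (x' - x))\<^sup>2"
  unfolding gx_def
proof (rule quad_bound)
  show "(\<lambda>x. f x y) differentiable at z" for z by (rule diff_x)
  show "norm (grad (\<lambda>x. f x y) z - grad (\<lambda>x. f x y) w) \<le> l * norm (z - w)" for z w
    using gx_lip[of z y w y] unfolding gx_def by simp
qed

lemma quad_y: "\<bar>f x y' - f x y - gy x y \<bullet> (y' - y)\<bar> \<le> l / 2 * (norm (y' - y))\<^sup>2"
  unfolding gy_def
proof (rule quad_bound)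
  show "(\<lambda>y. f x y) differentiable at z" for z by (rule diff_y)
  show "norm (grad (\<lambda>y. f x y) z - grad (\<lambda>y. f x y) w) \<le> l * norm (z - w)" for z w
    using gy_lip[of x z x w] unfolding gy_def by simp
qed

lemma EB: "\<exists>z. (\<forall>y'. f x y' \<le> f x z) \<and> norm (y - z) \<le> cEB * norm (gy x y) / \<mu>"
proof -
  have "\<exists>z. f x z = Phi f x \<and> norm (y - z) \<le> 12 / 11 * norm (grad (\<lambda>y. f x y) y) / \<mu>"
  proof (rule error_bound)
    show "(\<lambda>y. f x y) differentiable at z" for z by (rule diff_y)
    show "norm (grad (\<lambda>y. f x y) z - grad (\<lambda>y. f x y) w) \<le> l * norm (z - w)" for z w
      using gy_lip[of x z x w] unfolding gy_def by simp
  qed (use l_pos mu_pos le_Phi PL in auto)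
  then obtain z where "f x z = Phi f x" "norm (y - z) \<le> 12 / 11 * norm (grad (\<lambda>y. f x y) y) / \<mu>"
    by blast
  then show ?thesis using le_Phi unfolding cEB_def gy_def by metis
qed

lemma gy_max: assumes "\<forall>y'. f x y' \<le> f x y" shows "gy x y = 0"
proof -
  have d: "((\<lambda>y. f x y) has_derivative (\<lambda>v. gy x y \<bullet> v)) (at y)"
    using grad_has_derivative[OF diff_y] unfolding gy_def .
  have "(\<lambda>v. gy x y \<bullet> v) = (\<lambda>v. 0)"
    by (rule differential_zero_maxmin[OF UNIV_I open_UNIV d]) (use assms in auto)
  then have "gy x y \<bullet> gy x y = 0" by metis
  then show ?thesis by simp
qed

definition CPhi :: real where "CPhi = l / 2 + cEB * l\<^sup>2 / \<mu>"

lemma CPhi_pos: "CPhi > 0"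
  unfolding CPhi_def cEB_def using l_pos mu_pos by (simp add: add_pos_nonneg)

lemma Phi_quad:
  assumes ys: "\<forall>y'. f x y' \<le> f x ys"
  shows "\<bar>Phi f x' - Phi f x - gx x ys \<bullet> (x' - x)\<bar> \<le> CPhi * (norm (x' - x))\<^sup>2"
proof -
  have Px: "Phi f x = f x ys" by (rule Phi_eq[OF ys])
  have lo: "Phi f x' \<ge> Phi f x + gx x ys \<bullet> (x' - x) - l / 2 * (norm (x' - x))\<^sup>2"
    using le_Phi[of x' ys] quad_x[of x' ys x] Px unfolding abs_le_iff by linarith
  obtain z where z: "\<forall>y'. f x' y' \<le> f x' z" "norm (ys - z) \<le> cEB * norm (gy x' ys) / \<mu>"
    using EB by blast
  have "gy x ys = 0" by (rule gy_max[OF ys])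
  then have "norm (gy x' ys) \<le> l * norm (x' - x)" using gy_lip[of x' ys x ys] by simp
  then have "cEB * norm (gy x' ys) / \<mu> \<le> cEB * (l * norm (x' - x)) / \<mu>"
    using mu_pos by (intro divide_right_mono mult_left_mono) (auto simp: cEB_def)
  then have zys: "norm (ys - z) \<le> cEB * l * norm (x' - x) / \<mu>"
    using z(2) by (metis order_trans mult.assoc)
  have Px': "Phi f x' = f x' z" by (rule Phi_eq[OF z(1)])
  have "f x' z \<le> f x z + gx x z \<bullet> (x' - x) + l / 2 * (norm (x' - x))\<^sup>2"
    using quad_x[of x' z x] unfolding abs_le_iff by linarith
  moreover have "f x z \<le> Phi f x" by (rule le_Phi)
  moreover have "(gx x z - gx x ys) \<bullet> (x' - x) \<le> cEB * l\<^sup>2 / \<mu> * (norm (x' - x))\<^sup>2"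
  proof -
    have "(gx x z - gx x ys) \<bullet> (x' - x) \<le> norm (gx x z - gx x ys) * norm (x' - x)"
      by (rule norm_cauchy_schwarz)
    also have "\<dots> \<le> (l * norm (ys - z)) * norm (x' - x)"
      using gx_lip[of x z x ys] by (intro mult_right_mono) (auto simp: norm_minus_commute)
    also have "\<dots> \<le> (l * (cEB * l * norm (x' - x) / \<mu>)) * norm (x' - x)"
      using zys l_pos by (intro mult_right_mono mult_left_mono) auto
    also have "\<dots> = cEB * l\<^sup>2 / \<mu> * (norm (x' - x))\<^sup>2" by (simp add: power2_eq_square)
    finally show ?thesis .
  qed
  ultimately have up: "Phi f x' \<le> Phi f x + gx x ys \<bullet> (x' - x) + CPhi * (norm (x' - x))\<^sup>2"
    unfolding Px' CPhi_def by (simp add: inner_diff_left algebra_simps)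
  have "l / 2 * (norm (x' - x))\<^sup>2 \<le> CPhi * (norm (x' - x))\<^sup>2"
    unfolding CPhi_def using l_pos mu_pos by (intro mult_right_mono) (auto simp: cEB_def)
  then show ?thesis using lo up unfolding abs_le_iff by linarith
qed

lemma Phi_has_derivative:
  assumes ys: "\<forall>y'. f x y' \<le> f x ys"
  shows "(Phi f has_derivative (\<lambda>h. gx x ys \<bullet> h)) (at x)"
  unfolding has_derivative_at_alt
proof (intro conjI allI impI)
  show "bounded_linear ((\<bullet>) (gx x ys))" by (rule bounded_linear_inner_right)
  fix e :: real assume e: "e > 0"
  show "\<exists>d>0. \<forall>y. norm (y - x) < d \<longrightarrow> norm (Phi f y - Phi f x - gx x ys \<bullet> (y - x)) \<le> e * norm (y - x)"
  proof (intro exI[of _ "e / CPhi"] conjI allI impI)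
    show "e / CPhi > 0" using e CPhi_pos by simp
    fix y assume y: "norm (y - x) < e / CPhi"
    have "norm (Phi f y - Phi f x - gx x ys \<bullet> (y - x)) \<le> CPhi * (norm (y - x))\<^sup>2"
      using Phi_quad[OF ys, of y] by simp
    also have "\<dots> = (CPhi * norm (y - x)) * norm (y - x)" by (simp add: power2_eq_square)
    also have "\<dots> \<le> e * norm (y - x)"
      using y CPhi_pos by (intro mult_right_mono) (auto simp: field_simps)
    finally show "norm (Phi f y - Phi f x - gx x ys \<bullet> (y - x)) \<le> e * norm (y - x)" .
  qed
qed

lemma grad_Phi: assumes "\<forall>y'. f x y' \<le> f x ys" shows "grad (Phi f) x = gx x ys"
  by (rule grad_eqI[OF Phi_has_derivative[OF assms]])

lemma Phi_differentiable: "Phi f differentiable (at x)"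
proof -
  obtain z where "\<forall>y'. f x y' \<le> f x z" using max_attained by blast
  then show ?thesis using Phi_has_derivative differentiable_def by blast
qed

definition LPhi :: real where "LPhi = l + cEB * l\<^sup>2 / \<mu>"

lemma grad_Phi_lip: "norm (grad (Phi f) x1 - grad (Phi f) x2) \<le> LPhi * norm (x1 - x2)"
proof -
  obtain y1 where y1: "\<forall>y'. f x1 y' \<le> f x1 y1" using max_attained by blast
  obtain z where z: "\<forall>y'. f x2 y' \<le> f x2 z" "norm (y1 - z) \<le> cEB * norm (gy x2 y1) / \<mu>"
    using EB by blast
  have "gy x1 y1 = 0" by (rule gy_max[OF y1])
  then have "norm (gy x2 y1) \<le> l * norm (x1 - x2)" using gy_lip[of x2 y1 x1 y1]
    by (simp add: norm_minus_commute)
  then have "cEB * norm (gy x2 y1) / \<mu> \<le> cEB * (l * norm (x1 - x2)) / \<mu>"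
    using mu_pos by (intro divide_right_mono mult_left_mono) (auto simp: cEB_def)
  then have zy: "norm (y1 - z) \<le> cEB * l * norm (x1 - x2) / \<mu>"
    using z(2) by (metis order_trans mult.assoc)
  have "norm (grad (Phi f) x1 - grad (Phi f) x2) = norm (gx x1 y1 - gx x2 z)"
    using grad_Phi[OF y1] grad_Phi[OF z(1)] by simp
  also have "\<dots> \<le> l * (norm (x1 - x2) + norm (y1 - z))" by (rule gx_lip)
  also have "\<dots> \<le> l * (norm (x1 - x2) + cEB * l * norm (x1 - x2) / \<mu>)"
    using zy l_pos by (intro mult_left_mono add_left_mono) auto
  also have "\<dots> = LPhi * norm (x1 - x2)" unfolding LPhi_def by (simp add: algebra_simps power2_eq_square)
  finally show ?thesis .
qed

lemma Phi_descent: "Phi f x' \<le> Phi f x + grad (Phi f) x \<bullet> (x' - x) + LPhi / 2 * (norm (x' - x))\<^sup>2"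
proof -
  have "\<bar>Phi f x' - Phi f x - grad (Phi f) x \<bullet> (x' - x)\<bar> \<le> LPhi / 2 * (norm (x' - x))\<^sup>2"
    by (rule quad_bound[OF Phi_differentiable grad_Phi_lip])
  then show ?thesis unfolding abs_le_iff by linarith
qed

lemma grad_Phi_near: "norm (grad (Phi f) x - gx x y) \<le> cEB * l / \<mu> * norm (gy x y)"
proof -
  obtain z where z: "\<forall>y'. f x y' \<le> f x z" "norm (y - z) \<le> cEB * norm (gy x y) / \<mu>"
    using EB by blast
  have "norm (grad (Phi f) x - gx x y) = norm (gx x z - gx x y)" using grad_Phi[OF z(1)] by simp
  also have "\<dots> \<le> l * (norm (x - x) + norm (z - y))" by (rule gx_lip)
  also have "\<dots> \<le> l * (cEB * norm (gy x y) / \<mu>)" using z(2) l_pos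
    by (intro mult_left_mono) (auto simp: norm_minus_commute)
  also have "\<dots> = cEB * l / \<mu> * norm (gy x y)" by simp
  finally show ?thesis .
qed

end



lemma young_sq:
  fixes a b eps :: real assumes "eps > 0"
  shows "(a + b)\<^sup>2 \<le> (1 + eps) * a\<^sup>2 + (1 + 1 / eps) * b\<^sup>2"
proof -
  have "0 \<le> (eps * a - b)\<^sup>2 / eps" using assms by simp
  also have "(eps * a - b)\<^sup>2 / eps = eps * a\<^sup>2 - 2 * a * b + b\<^sup>2 / eps"
    using assms by (simp add: field_simps power2_eq_square)
  finally have "2 * a * b \<le> eps * a\<^sup>2 + b\<^sup>2 / eps" by simp
  then show ?thesis by (simp add: power2_eq_square field_simps)
qed

lemma cont_shift:
  fixes \<phi> :: "'a::euclidean_space \<Rightarrow> real"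
  assumes dif: "\<And>z. \<phi> differentiable (at z)"
  shows "continuous_on UNIV (\<lambda>u. \<phi> (x + m *\<^sub>R u))"
proof -
  have "continuous_on UNIV \<phi>"
    using dif by (simp add: differentiable_imp_continuous_on differentiable_on_def differentiable_at_withinI)
  then show ?thesis
    by (rule continuous_on_compose2[of UNIV]) (auto intro!: continuous_intros)
qed

context
  fixes \<phi> :: "'a::euclidean_space \<Rightarrow> real" and x :: 'a and m l :: real
  assumes dif: "\<And>z. \<phi> differentiable (at z)"
    and lip: "\<And>z w. norm (grad \<phi> z - grad \<phi> w) \<le> l * norm (z - w)"
    and m: "m > 0" and l: "l \<ge> 0"
begin

definition zs :: "'a \<Rightarrow> real" where
  "zs u = (\<phi> (x + m *\<^sub>R u) - \<phi> x) / (m / real DIM('a))"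

definition zr :: "'a \<Rightarrow> real" where
  "zr u = \<phi> (x + m *\<^sub>R u) - \<phi> x - grad \<phi> x \<bullet> (m *\<^sub>R u)"

lemma zs_cont: "continuous_on UNIV zs"
  unfolding zs_def by (intro continuous_intros cont_shift[OF dif]) (use m in auto)

lemma zs_split: "zs u = real DIM('a) * (grad \<phi> x \<bullet> u) + real DIM('a) / m * zr u"
  unfolding zs_def zr_def using m by (simp add: field_simps)

lemma zr_bound: assumes "norm u \<le> 1" shows "\<bar>zr u\<bar> \<le> l * m\<^sup>2 / 2"
proof -
  have "\<bar>zr u\<bar> \<le> l / 2 * (norm (m *\<^sub>R u))\<^sup>2"
    unfolding zr_def using quad_bound[OF dif lip, of "x + m *\<^sub>R u" x] by simp
  also have "\<dots> \<le> l / 2 * m\<^sup>2"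
  proof (rule mult_left_mono)
    have "norm (m *\<^sub>R u) \<le> m" using assms m by (simp add: mult_left_le)
    then show "(norm (m *\<^sub>R u))\<^sup>2 \<le> m\<^sup>2" by (simp add: power_mono)
  qed (use l in simp)
  finally show ?thesis by simp
qed

lemma zo_first:
  "\<bar>(\<integral>u. zs u * (w \<bullet> u) \<partial>unif_sphere) - grad \<phi> x \<bullet> w\<bar> \<le> norm w * (real DIM('a) * l * m / 2)"
proof -
  interpret prob_space "unif_sphere :: 'a measure" by (rule prob_space_unif_sphere)
  define d where "d = real DIM('a)"
  have d: "d > 0" by (simp add: d_def)
  define e where "e = (\<lambda>u. d / m * zr u * (w \<bullet> u))"
  have zrc: "continuous_on UNIV zr" unfolding zr_def by (intro continuous_intros cont_shift[OF dif])
  have ie: "integrable unif_sphere e" unfolding e_def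
    by (rule integrable_sphere_cont) (intro continuous_intros zrc)
  have i1: "integrable unif_sphere (\<lambda>u. d * ((grad \<phi> x \<bullet> u) * (w \<bullet> u)))"
    by (rule integrable_sphere_cont) (intro continuous_intros)
  have eq: "zs u * (w \<bullet> u) = d * ((grad \<phi> x \<bullet> u) * (w \<bullet> u)) + e u" for u
    unfolding zs_split e_def d_def by (simp add: algebra_simps)
  have "(\<integral>u. zs u * (w \<bullet> u) \<partial>unif_sphere) = (\<integral>u. d * ((grad \<phi> x \<bullet> u) * (w \<bullet> u)) \<partial>unif_sphere) + (\<integral>u. e u \<partial>unif_sphere)"
    unfolding eq by (rule Bochner_Integration.integral_add[OF i1 ie])
  also have "(\<integral>u. d * ((grad \<phi> x \<bullet> u) * (w \<bullet> u)) \<partial>unif_sphere) = grad \<phi> x \<bullet> w"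
    using d by (simp add: sphere_second_moment d_def)
  finally have I: "(\<integral>u. zs u * (w \<bullet> u) \<partial>unif_sphere) - grad \<phi> x \<bullet> w = (\<integral>u. e u \<partial>unif_sphere)" by simp
  define B where "B = norm w * (d * l * m / 2)"
  have eb: "AE u in unif_sphere. \<bar>e u\<bar> \<le> B"
    using AE_sphere_norm
  proof eventually_elim
    case (elim u)
    have "\<bar>e u\<bar> = d / m * \<bar>zr u\<bar> * \<bar>w \<bullet> u\<bar>" unfolding e_def using d m by (simp add: abs_mult)
    also have "\<dots> \<le> d / m * (l * m\<^sup>2 / 2) * norm w"
    proof (intro mult_mono)
      show "\<bar>zr u\<bar> \<le> l * m\<^sup>2 / 2" using zr_bound elim by simp
      show "\<bar>w \<bullet> u\<bar> \<le> norm w" using Cauchy_Schwarz_ineq2[of w u] elim by simp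
    qed (use d m l in auto)
    also have "\<dots> = B" unfolding B_def using m by (simp add: power2_eq_square field_simps)
    finally show ?case .
  qed
  have "(\<integral>u. e u \<partial>unif_sphere) \<le> B"
    by (rule integral_le_const[OF ie]) (use eb in auto)
  moreover have "- B \<le> (\<integral>u. e u \<partial>unif_sphere)"
    by (rule integral_ge_const[OF ie]) (use eb in auto)
  ultimately show ?thesis unfolding I B_def d_def by (simp add: abs_le_iff)
qed

lemma zo_second:
  assumes eps: "eps > 0"
  shows "(\<integral>u. (zs u)\<^sup>2 \<partial>unif_sphere) \<le> (1 + eps) * real DIM('a) * (norm (grad \<phi> x))\<^sup>2
            + (1 + 1 / eps) * (real DIM('a))\<^sup>2 * l\<^sup>2 * m\<^sup>2 / 4"
proof -
  interpret prob_space "unif_sphere :: 'a measure" by (rule prob_space_unif_sphere)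
  define d where "d = real DIM('a)"
  have d: "d > 0" by (simp add: d_def)
  define C where "C = (1 + 1 / eps) * d\<^sup>2 * l\<^sup>2 * m\<^sup>2 / 4"
  have i1: "integrable unif_sphere (\<lambda>u. (zs u)\<^sup>2)"
    by (rule integrable_sphere_cont) (intro continuous_intros zs_cont)
  have i2: "integrable unif_sphere (\<lambda>u. (1 + eps) * d\<^sup>2 * ((grad \<phi> x \<bullet> u) * (grad \<phi> x \<bullet> u)) + C)"
    by (rule integrable_sphere_cont) (intro continuous_intros)
  have "(\<integral>u. (zs u)\<^sup>2 \<partial>unif_sphere) \<le> (\<integral>u. (1 + eps) * d\<^sup>2 * ((grad \<phi> x \<bullet> u) * (grad \<phi> x \<bullet> u)) + C \<partial>unif_sphere)"
  proof (rule integral_mono_AE[OF i1 i2])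
    show "AE u in unif_sphere. (zs u)\<^sup>2 \<le> (1 + eps) * d\<^sup>2 * ((grad \<phi> x \<bullet> u) * (grad \<phi> x \<bullet> u)) + C"
      using AE_sphere_norm
    proof eventually_elim
      case (elim u)
      have "(zs u)\<^sup>2 = (d * (grad \<phi> x \<bullet> u) + d / m * zr u)\<^sup>2" unfolding zs_split d_def ..
      also have "\<dots> \<le> (1 + eps) * (d * (grad \<phi> x \<bullet> u))\<^sup>2 + (1 + 1 / eps) * (d / m * zr u)\<^sup>2"
        by (rule young_sq[OF eps])
      also have "(d / m * zr u)\<^sup>2 \<le> (d / m * (l * m\<^sup>2 / 2))\<^sup>2"
      proof -
        have "\<bar>d / m * zr u\<bar> = d / m * \<bar>zr u\<bar>" using d m by (simp add: abs_mult)
        also have "\<dots> \<le> d / m * (l * m\<^sup>2 / 2)"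
          using zr_bound[of u] elim d m by (intro mult_left_mono) auto
        finally have "\<bar>d / m * zr u\<bar> \<le> d / m * (l * m\<^sup>2 / 2)" .
        then show ?thesis by (metis abs_le_square_iff abs_of_nonneg abs_ge_zero order_trans power2_abs)
      qed
      then have "(1 + 1 / eps) * (d / m * zr u)\<^sup>2 \<le> (1 + 1 / eps) * (d / m * (l * m\<^sup>2 / 2))\<^sup>2"
        using eps by (intro mult_left_mono) auto
      also have "(1 + 1 / eps) * (d / m * (l * m\<^sup>2 / 2))\<^sup>2 = C"
        unfolding C_def using m by (simp add: power2_eq_square field_simps)
      finally show ?case by (simp add: power2_eq_square algebra_simps)
    qed
  qed
  also have "\<dots> = (1 + eps) * d\<^sup>2 * ((grad \<phi> x \<bullet> grad \<phi> x) / d) + C"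
  proof -
    have ia: "integrable unif_sphere (\<lambda>u. (1 + eps) * d\<^sup>2 * ((grad \<phi> x \<bullet> u) * (grad \<phi> x \<bullet> u)))"
      by (rule integrable_sphere_cont) (intro continuous_intros)
    have "(\<integral>u. (1 + eps) * d\<^sup>2 * ((grad \<phi> x \<bullet> u) * (grad \<phi> x \<bullet> u)) + C \<partial>unif_sphere)
        = (\<integral>u. (1 + eps) * d\<^sup>2 * ((grad \<phi> x \<bullet> u) * (grad \<phi> x \<bullet> u)) \<partial>unif_sphere) + (\<integral>u. C \<partial>(unif_sphere::'a measure))"
      by (rule Bochner_Integration.integral_add[OF ia]) simp
    moreover have "prob UNIV = 1" using prob_space by simp
    ultimately show ?thesis by (simp add: sphere_second_moment d_def)
  qed
  also have "\<dots> = (1 + eps) * d * (norm (grad \<phi> x))\<^sup>2 + C"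
    using d by (simp add: power2_norm_eq_inner[symmetric] power2_eq_square)
  finally show ?thesis unfolding C_def d_def .
qed

end



lemma sphere_pair_sigma_finite:
  "pair_sigma_finite (unif_sphere :: 'a::euclidean_space measure) (unif_sphere :: 'b::euclidean_space measure)"
proof -
  interpret A: prob_space "unif_sphere :: 'a measure" by (rule prob_space_unif_sphere)
  interpret B: prob_space "unif_sphere :: 'b measure" by (rule prob_space_unif_sphere)
  show ?thesis by unfold_locales
qed

lemma sphere_pair_prob: "prob_space ((unif_sphere :: 'a::euclidean_space measure) \<Otimes>\<^sub>M (unif_sphere :: 'b::euclidean_space measure))"
proof -
  interpret A: prob_space "unif_sphere :: 'a measure" by (rule prob_space_unif_sphere)
  interpret B: prob_space "unif_sphere :: 'b measure" by (rule prob_space_unif_sphere)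
  interpret P: pair_prob_space "unif_sphere :: 'a measure" "unif_sphere :: 'b measure" by unfold_locales
  show ?thesis by (rule P.prob_space_axioms)
qed

lemma sets_sphere_pair[measurable_cong]:
  "sets ((unif_sphere :: 'a::euclidean_space measure) \<Otimes>\<^sub>M (unif_sphere :: 'b::euclidean_space measure)) = sets borel"
proof -
  have "sets ((unif_sphere :: 'a measure) \<Otimes>\<^sub>M (unif_sphere :: 'b measure)) = sets ((borel :: 'a measure) \<Otimes>\<^sub>M (borel :: 'b measure))"
    by (rule sets_pair_measure_cong) simp_all
  also have "\<dots> = sets (borel :: ('a \<times> 'b) measure)" by (simp only: borel_prod)
  finally show ?thesis .
qed

lemma AE_sphere_pair:
  "AE p in (unif_sphere :: 'a::euclidean_space measure) \<Otimes>\<^sub>M (unif_sphere :: 'b::euclidean_space measure).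
     fst p \<in> cball 0 1 \<and> snd p \<in> cball 0 1"
proof (rule pair_sigma_finite.AE_pair_measure[OF sphere_pair_sigma_finite])
  have "{x \<in> space ((unif_sphere :: 'a measure) \<Otimes>\<^sub>M (unif_sphere :: 'b measure)). fst x \<in> cball 0 1 \<and> snd x \<in> cball 0 1}
      = cball 0 1 \<times> cball 0 1" by (auto simp: space_pair_measure)
  moreover have "cball (0::'a) 1 \<times> cball (0::'b) 1 \<in> sets borel"
    by (intro borel_closed closed_Times closed_cball)
  ultimately show "{x \<in> space ((unif_sphere :: 'a measure) \<Otimes>\<^sub>M (unif_sphere :: 'b measure)). fst x \<in> cball 0 1 \<and> snd x \<in> cball 0 1}
      \<in> sets ((unif_sphere :: 'a measure) \<Otimes>\<^sub>M (unif_sphere :: 'b measure))"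
    using sets_sphere_pair by simp
  show "AE x in unif_sphere. AE y in unif_sphere. fst (x, y) \<in> cball (0::'a) 1 \<and> snd (x, y) \<in> cball (0::'b) 1"
    using AE_sphere_le
  proof eventually_elim
    case (elim x)
    show ?case using AE_sphere_le by eventually_elim (use elim in simp)
  qed
qed

lemma integrable_pair_cont:
  fixes F :: "'a::euclidean_space \<times> 'b::euclidean_space \<Rightarrow> real"
  assumes "continuous_on UNIV F"
  shows "integrable ((unif_sphere :: 'a measure) \<Otimes>\<^sub>M (unif_sphere :: 'b measure)) F"
proof -
  interpret prob_space "(unif_sphere :: 'a measure) \<Otimes>\<^sub>M (unif_sphere :: 'b measure)" by (rule sphere_pair_prob)
  have cc: "compact (cball (0::'a) 1 \<times> cball (0::'b) 1)" by (intro compact_Times compact_cball)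
  have "compact (F ` (cball 0 1 \<times> cball 0 1))"
    by (rule compact_continuous_image[OF _ cc]) (use assms continuous_on_subset in blast)
  then obtain B where B: "\<And>p. p \<in> cball 0 1 \<times> cball 0 1 \<Longrightarrow> norm (F p) \<le> B"
    by (meson bounded_iff compact_imp_bounded imageI)
  show ?thesis
  proof (rule integrable_const_bound)
    show "AE x in (unif_sphere :: 'a measure) \<Otimes>\<^sub>M (unif_sphere :: 'b measure). norm (F x) \<le> B"
      using AE_sphere_pair by eventually_elim (use B in \<open>auto simp: mem_Times_iff\<close>)
    have "F \<in> borel_measurable borel" using borel_measurable_continuous_onI[OF assms] .
    then show "F \<in> borel_measurable ((unif_sphere :: 'a measure) \<Otimes>\<^sub>M (unif_sphere :: 'b measure))"
      by (subst measurable_cong_sets[OF sets_sphere_pair refl]) simp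
  qed
qed

context minmax
begin

lemma f_cont: "continuous_on UNIV (\<lambda>p. f (fst p) (snd p))"
proof -
  have "isCont (\<lambda>p. f (fst p) (snd p)) p0" for p0
  proof -
    obtain x0 y0 where p0: "p0 = (x0, y0)" by (cases p0)
    define M where "M = norm (gx x0 y0) + norm (gy x0 y0)"
    define B where "B = (\<lambda>p. M * dist p p0 + 2 * l * (dist p p0)\<^sup>2)"
    have bnd: "\<bar>f (fst p) (snd p) - f x0 y0\<bar> \<le> B p" for p
    proof -
      obtain x y where p: "p = (x, y)" by (cases p)
      define r where "r = dist p p0"
      have rx: "norm (x - x0) \<le> r" unfolding r_def p p0 using dist_fst_le[of "(x,y)" "(x0,y0)"] by (simp add: dist_norm)
      have ry: "norm (y - y0) \<le> r" unfolding r_def p p0 using dist_snd_le[of "(x,y)" "(x0,y0)"] by (simp add: dist_norm)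
      have r0: "r \<ge> 0" unfolding r_def by simp
      have sqy: "(norm (y - y0))\<^sup>2 \<le> r\<^sup>2" using ry by (simp add: power_mono)
      have sqx: "(norm (x - x0))\<^sup>2 \<le> r\<^sup>2" using rx by (simp add: power_mono)
      have ng: "norm (gy x y0) \<le> norm (gy x0 y0) + l * r"
      proof -
        have "norm (gy x y0 - gy x0 y0) \<le> l * (norm (x - x0) + norm (y0 - y0))" by (rule gy_lip)
        also have "\<dots> \<le> l * r" using rx l_pos by simp
        finally show ?thesis using norm_triangle_sub[of "gy x y0" "gy x0 y0"] by linarith
      qed
      have "\<bar>f x y - f x y0\<bar> \<le> \<bar>gy x y0 \<bullet> (y - y0)\<bar> + l / 2 * (norm (y - y0))\<^sup>2"
        using quad_y[of x y y0] by linarith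
      also have "\<bar>gy x y0 \<bullet> (y - y0)\<bar> \<le> norm (gy x y0) * norm (y - y0)" by (rule Cauchy_Schwarz_ineq2)
      also have "norm (gy x y0) * norm (y - y0) \<le> (norm (gy x0 y0) + l * r) * r"
        using ng ry r0 l_pos by (intro mult_mono) auto
      also have "l / 2 * (norm (y - y0))\<^sup>2 \<le> l / 2 * r\<^sup>2"
        using sqy l_pos by (intro mult_left_mono) auto
      finally have 1: "\<bar>f x y - f x y0\<bar> \<le> (norm (gy x0 y0) + l * r) * r + l / 2 * r\<^sup>2" by simp
      have "\<bar>f x y0 - f x0 y0\<bar> \<le> \<bar>gx x0 y0 \<bullet> (x - x0)\<bar> + l / 2 * (norm (x - x0))\<^sup>2"
        using quad_x[of x y0 x0] by linarith
      also have "\<bar>gx x0 y0 \<bullet> (x - x0)\<bar> \<le> norm (gx x0 y0) * norm (x - x0)" by (rule Cauchy_Schwarz_ineq2)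
      also have "norm (gx x0 y0) * norm (x - x0) \<le> norm (gx x0 y0) * r"
        using rx by (intro mult_left_mono) auto
      also have "l / 2 * (norm (x - x0))\<^sup>2 \<le> l / 2 * r\<^sup>2"
        using sqx l_pos by (intro mult_left_mono) auto
      finally have 2: "\<bar>f x y0 - f x0 y0\<bar> \<le> norm (gx x0 y0) * r + l / 2 * r\<^sup>2" by simp
      have "\<bar>f x y - f x0 y0\<bar> \<le> (norm (gy x0 y0) + l * r) * r + l / 2 * r\<^sup>2 + (norm (gx x0 y0) * r + l / 2 * r\<^sup>2)"
        using 1 2 by linarith
      also have "\<dots> = B p" unfolding B_def M_def r_def[symmetric] by (simp add: algebra_simps power2_eq_square)
      finally show ?thesis by (simp add: p)
    qed
    have B0: "(B \<longlongrightarrow> 0) (at p0)"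
    proof -
      have "(B \<longlongrightarrow> M * dist p0 p0 + 2 * l * (dist p0 p0)\<^sup>2) (at p0)"
        unfolding B_def by (intro tendsto_intros)
      then show ?thesis by simp
    qed
    have "((\<lambda>p. f (fst p) (snd p) - f x0 y0) \<longlongrightarrow> 0) (at p0)"
    proof (rule tendsto_sandwich[where f="\<lambda>p. - B p" and h=B])
      have b1: "- B p \<le> f (fst p) (snd p) - f x0 y0" for p using bnd[of p] unfolding abs_le_iff by linarith
      have b2: "f (fst p) (snd p) - f x0 y0 \<le> B p" for p using bnd[of p] unfolding abs_le_iff by linarith
      show "\<forall>\<^sub>F p in at p0. - B p \<le> f (fst p) (snd p) - f x0 y0" using b1 by (intro always_eventually) blast
      show "\<forall>\<^sub>F p in at p0. f (fst p) (snd p) - f x0 y0 \<le> B p" using b2 by (intro always_eventually) blast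
      show "((\<lambda>p. - B p) \<longlongrightarrow> 0) (at p0)" using tendsto_minus[OF B0] by simp
    qed (rule B0)
    then have "((\<lambda>p. f (fst p) (snd p)) \<longlongrightarrow> f x0 y0) (at p0)" by (rule LIM_zero_cancel)
    then show ?thesis unfolding isCont_def p0 by simp
  qed
  then show ?thesis by (simp add: continuous_at_imp_continuous_on)
qed

lemma f_cont_comp[continuous_intros]:
  assumes "continuous_on S a" "continuous_on S b"
  shows "continuous_on S (\<lambda>z. f (a z) (b z))"
  using continuous_on_compose2[OF f_cont continuous_on_Pair[OF assms]] by simp

lemma Phi_cont: "continuous_on UNIV (Phi f)"
  using Phi_differentiable
  by (simp add: differentiable_imp_continuous_on differentiable_on_def differentiable_at_withinI)

lemma Phi_cont_comp[continuous_intros]: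
  assumes "continuous_on S a"
  shows "continuous_on S (\<lambda>z. Phi f (a z))"
  using continuous_on_compose2[OF Phi_cont assms] by simp

lemma lip_cont:
  fixes F :: "'c::metric_space \<Rightarrow> 'd::metric_space"
  assumes "\<And>p q. dist (F p) (F q) \<le> C * dist p q"
  shows "continuous_on UNIV F"
proof (rule lipschitz_on_continuous_on)
  show "(max C 0)-lipschitz_on UNIV F"
  proof (rule lipschitz_onI)
    fix p q :: 'c
    have "C * dist p q \<le> max C 0 * dist p q" by (intro mult_right_mono) auto
    then show "dist (F p) (F q) \<le> max C 0 * dist p q" using assms[of p q] by linarith
  qed simp
qed

lemma gradPhi_cont: "continuous_on UNIV (grad (Phi f))"
  by (rule lip_cont[where C=LPhi]) (simp add: dist_norm grad_Phi_lip)

lemma gradPhi_cont_comp[continuous_intros]: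
  assumes "continuous_on S a"
  shows "continuous_on S (\<lambda>z. grad (Phi f) (a z))"
  using continuous_on_compose2[OF gradPhi_cont assms] by simp

end



lemma bracket_ineq:
  fixes A Dn P E :: real
  assumes "A \<ge> 0" "Dn \<ge> 0" "E \<ge> 0" "\<bar>P\<bar> \<le> A * Dn"
  shows "A\<^sup>2 + P / 2 - Dn\<^sup>2 / 2 - (A + Dn / 2) * E - 1029/3520 * (A\<^sup>2 + 2 * P + Dn\<^sup>2) + 121/36 * Dn\<^sup>2
         \<ge> A\<^sup>2 / 4 - 11/16 * E\<^sup>2"
proof -
  have y1: "A * E \<le> 2/5 * A\<^sup>2 + 5/8 * E\<^sup>2"
  proof -
    have "0 \<le> 2/5 * (A - 5/4 * E)\<^sup>2" by simp
    then show ?thesis by (simp add: power2_eq_square algebra_simps)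
  qed
  have y2: "Dn * E \<le> 2 * Dn\<^sup>2 + 1/8 * E\<^sup>2"
  proof -
    have "0 \<le> 2 * (Dn - 1/4 * E)\<^sup>2" by simp
    then show ?thesis by (simp add: power2_eq_square algebra_simps)
  qed
  have y3: "A * Dn \<le> 1/2 * A\<^sup>2 + 1/2 * Dn\<^sup>2"
  proof -
    have "0 \<le> 1/2 * (A - Dn)\<^sup>2" by simp
    then show ?thesis by (simp add: power2_eq_square algebra_simps)
  qed
  have p: "P \<le> A * Dn" using assms(4) by linarith
  have sq: "A\<^sup>2 \<ge> 0" "Dn\<^sup>2 \<ge> 0" by simp_all
  show ?thesis using y1 y2 y3 p by (simp add: algebra_simps) (insert sq, argo)
qed

lemma final_alg:
  fixes \<alpha> \<beta> \<mu> l L d1 d2 \<mu>1 \<mu>2 A Dn P Hn Gn2 LB K wG wn :: real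
  assumes pos: "\<alpha> > 0" "\<beta> > 0" "\<mu> > 0" "l > 0" "d1 \<ge> 1" "d2 \<ge> 1" "\<mu>1 > 0" "\<mu>2 > 0"
      "A \<ge> 0" "Dn \<ge> 0" "Hn \<ge> 0"
    and L_def: "L = l + l\<^sup>2 / (2 * \<mu>)"
    and beta_le: "\<beta> \<le> 1 / (4 * d2 * L)"
    and alpha_le1: "\<alpha> \<le> \<beta> / (32 * (l / \<mu>)\<^sup>2)"
    and alpha_le2: "\<alpha> \<le> 1 / (10 * d1 * L)"
    and P: "\<bar>P\<bar> \<le> A * Dn"
    and Dn_le: "Dn \<le> 12 / 11 * l / \<mu> * Hn"
    and Gn2: "Gn2 = A\<^sup>2 + 2 * P + Dn\<^sup>2"
    and K: "K = 3/4 * (l + 12 / 11 * l\<^sup>2 / \<mu>) + l / 4 + \<beta> * l\<^sup>2 / 4"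
    and wG: "wG = A\<^sup>2 + P / 2 - Dn\<^sup>2 / 2"
    and wn: "wn \<le> A + Dn / 2"
    and LB: "LB \<ge> \<alpha> * (wG - wn * (d1 * l * \<mu>1 / 2)) - K * \<alpha>\<^sup>2 * (3/2 * d1 * Gn2 + 3/4 * d1\<^sup>2 * l\<^sup>2 * \<mu>1\<^sup>2)
               + \<beta> / 8 * Hn\<^sup>2 - 5/32 * \<beta> * d2\<^sup>2 * l\<^sup>2 * \<mu>2\<^sup>2"
  shows "LB \<ge> \<alpha> / 4 * A\<^sup>2 - (5 * d1 * L + 3 / (2 * \<alpha>) + 3/2 * L + d2 * L) * d1\<^sup>2 * L\<^sup>2 * \<alpha>\<^sup>2 / 4 * \<mu>1\<^sup>2
             - 3 * d2\<^sup>2 * L\<^sup>2 * \<beta> / 16 * \<mu>2\<^sup>2"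
proof -
  define E where "E = d1 * l * \<mu>1 / 2"
  have E0: "E \<ge> 0" using pos by (simp add: E_def)
  have lL: "l \<le> L" using pos L_def by simp
  have L0: "L > 0" using lL pos by linarith
  have lL2: "l\<^sup>2 \<le> L\<^sup>2" using lL pos by (simp add: power_mono)
  have Gn0: "Gn2 \<ge> 0"
  proof -
    have "(A - Dn)\<^sup>2 \<ge> 0" by simp
    then show ?thesis using Gn2 P by (simp add: power2_eq_square algebra_simps abs_le_iff)
  qed
  have bl: "\<beta> * l\<^sup>2 \<le> L / 4"
  proof -
    have "1 / (4 * d2 * L) \<le> 1 / (4 * L)"
      by (rule frac_le) (use pos L0 in auto)
    then have "\<beta> \<le> 1 / (4 * L)" using beta_le by linarith
    then have "\<beta> * l\<^sup>2 \<le> 1 / (4 * L) * L\<^sup>2" using lL2 L0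
      by (intro mult_mono) auto
    also have "\<dots> = L / 4" using L0 by (simp add: power2_eq_square)
    finally show ?thesis .
  qed
  have Kb: "K \<le> 343 / 176 * L"
  proof -
    have "3/4 * (l + 12 / 11 * l\<^sup>2 / \<mu>) \<le> 18 / 11 * L"
      unfolding L_def using pos by (simp add: field_simps)
    then show ?thesis unfolding K using bl lL by linarith
  qed
  have K0: "K \<ge> 0" unfolding K using pos by (simp add: add_nonneg_nonneg)
  have adL: "\<alpha> * d1 * L \<le> 1 / 10"
  proof -
    have q: "0 < 10 * d1 * L" using pos L0 by simp
    have "\<alpha> * (10 * d1 * L) \<le> 1" by (metis alpha_le2 pos_le_divide_eq q)
    moreover have "\<alpha> * (10 * d1 * L) = 10 * (\<alpha> * d1 * L)" by (simp add: mult_ac)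
    ultimately have "10 * (\<alpha> * d1 * L) \<le> 1" by argo
    then show ?thesis by argo
  qed
  have gam: "K * \<alpha>\<^sup>2 * (3/2 * d1 * Gn2) \<le> 1029 / 3520 * \<alpha> * Gn2"
  proof -
    have "K * (\<alpha> * d1) \<le> 343 / 176 * L * (\<alpha> * d1)" using Kb pos by (intro mult_right_mono) auto
    also have "\<dots> = 343 / 176 * (\<alpha> * d1 * L)" by simp
    also have "\<dots> \<le> 343 / 176 * (1/10)" using adL by (intro mult_left_mono) auto
    finally have "K * (\<alpha> * d1) \<le> 343 / 1760" by simp
    then have "K * (\<alpha> * d1) * (3/2 * \<alpha> * Gn2) \<le> 343 / 1760 * (3/2 * \<alpha> * Gn2)"
      using pos Gn0 by (intro mult_right_mono) auto
    then show ?thesis by (simp add: power2_eq_square algebra_simps)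
  qed
  have Hb: "\<beta> / 8 * Hn\<^sup>2 \<ge> 121 / 36 * \<alpha> * Dn\<^sup>2"
  proof -
    define k where "k = l / \<mu>"
    have k0: "k > 0" using pos by (simp add: k_def)
    have "\<alpha> * (32 * k\<^sup>2) \<le> \<beta>" using alpha_le1 k0 unfolding k_def[symmetric] by (simp add: field_simps)
    then have b: "4 * \<alpha> * k\<^sup>2 \<le> \<beta> / 8" by simp
    have "Dn \<le> 12 / 11 * (k * Hn)" using Dn_le by (simp add: k_def)
    then have "Dn\<^sup>2 \<le> (12 / 11 * (k * Hn))\<^sup>2" using pos by (simp add: power_mono)
    then have d: "121 / 144 * Dn\<^sup>2 \<le> k\<^sup>2 * Hn\<^sup>2" by (simp add: power2_eq_square algebra_simps)
    have "121 / 36 * \<alpha> * Dn\<^sup>2 = 4 * \<alpha> * (121 / 144 * Dn\<^sup>2)" by simp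
    also have "\<dots> \<le> 4 * \<alpha> * (k\<^sup>2 * Hn\<^sup>2)" using d pos by (intro mult_left_mono) auto
    also have "\<dots> = (4 * \<alpha> * k\<^sup>2) * Hn\<^sup>2" by simp
    also have "\<dots> \<le> \<beta> / 8 * Hn\<^sup>2" using b by (intro mult_right_mono) auto
    finally show ?thesis .
  qed
  have br: "A\<^sup>2 + P / 2 - Dn\<^sup>2 / 2 - (A + Dn / 2) * E - 1029/3520 * (A\<^sup>2 + 2 * P + Dn\<^sup>2) + 121/36 * Dn\<^sup>2
         \<ge> A\<^sup>2 / 4 - 11/16 * E\<^sup>2"
    by (rule bracket_ineq) (use pos E0 P in auto)
  have wnE: "wn * E \<le> (A + Dn / 2) * E" using wn E0 by (rule mult_right_mono)
  have main: "LB \<ge> \<alpha> * (A\<^sup>2 / 4 - 11/16 * E\<^sup>2) - K * \<alpha>\<^sup>2 * (3/4 * d1\<^sup>2 * l\<^sup>2 * \<mu>1\<^sup>2) - 5/32 * \<beta> * d2\<^sup>2 * l\<^sup>2 * \<mu>2\<^sup>2"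
  proof -
    have e2: "\<alpha> * (A\<^sup>2 / 4 - 11/16 * E\<^sup>2) \<le> \<alpha> * (wG - (A + Dn / 2) * E - 1029/3520 * Gn2 + 121/36 * Dn\<^sup>2)"
      using br pos unfolding wG Gn2 by (intro mult_left_mono) auto
    have e1: "\<alpha> * (wG - (A + Dn / 2) * E - 1029/3520 * Gn2 + 121/36 * Dn\<^sup>2)
        = \<alpha> * wG - \<alpha> * ((A + Dn / 2) * E) - 1029/3520 * (\<alpha> * Gn2) + 121/36 * (\<alpha> * Dn\<^sup>2)"
      by (simp add: algebra_simps)
    have e3: "\<alpha> * (wG - wn * E) = \<alpha> * wG - \<alpha> * (wn * E)" by (simp add: algebra_simps)
    have e4: "K * \<alpha>\<^sup>2 * (3/2 * d1 * Gn2 + 3/4 * d1\<^sup>2 * l\<^sup>2 * \<mu>1\<^sup>2) = K * \<alpha>\<^sup>2 * (3/2 * d1 * Gn2) + K * \<alpha>\<^sup>2 * (3/4 * d1\<^sup>2 * l\<^sup>2 * \<mu>1\<^sup>2)"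
      by (simp add: distrib_left)
    have e5: "\<alpha> * (wn * E) \<le> \<alpha> * ((A + Dn / 2) * E)" using wnE pos by (intro mult_left_mono) auto
    have gam': "K * \<alpha>\<^sup>2 * (3/2 * d1 * Gn2) \<le> 1029 / 3520 * (\<alpha> * Gn2)" using gam by simp
    have Hb': "\<beta> / 8 * Hn\<^sup>2 \<ge> 121 / 36 * (\<alpha> * Dn\<^sup>2)" using Hb by simp
    have LB': "LB \<ge> \<alpha> * (wG - wn * E) - K * \<alpha>\<^sup>2 * (3/2 * d1 * Gn2 + 3/4 * d1\<^sup>2 * l\<^sup>2 * \<mu>1\<^sup>2)
               + \<beta> / 8 * Hn\<^sup>2 - 5/32 * \<beta> * d2\<^sup>2 * l\<^sup>2 * \<mu>2\<^sup>2" using LB unfolding E_def .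
    show ?thesis using e1 e2 e3 e4 e5 gam' Hb' LB' by argo
  qed
  have f1: "\<alpha> * (11/16 * E\<^sup>2) \<le> 3 / (2 * \<alpha>) * d1\<^sup>2 * L\<^sup>2 * \<alpha>\<^sup>2 / 4 * \<mu>1\<^sup>2"
  proof -
    have "\<alpha> * (11/16 * E\<^sup>2) = 11/64 * \<alpha> * d1\<^sup>2 * \<mu>1\<^sup>2 * l\<^sup>2"
      unfolding E_def by (simp add: power2_eq_square)
    also have "\<dots> \<le> 11/64 * \<alpha> * d1\<^sup>2 * \<mu>1\<^sup>2 * L\<^sup>2" using lL2 pos by (intro mult_left_mono) auto
    also have "\<dots> \<le> 3 / (2 * \<alpha>) * d1\<^sup>2 * L\<^sup>2 * \<alpha>\<^sup>2 / 4 * \<mu>1\<^sup>2"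
      using pos L0 by (simp add: power2_eq_square field_simps)
    finally show ?thesis .
  qed
  have f2: "K * \<alpha>\<^sup>2 * (3/4 * d1\<^sup>2 * l\<^sup>2 * \<mu>1\<^sup>2) \<le> (5 * d1 * L + 3/2 * L + d2 * L) * d1\<^sup>2 * L\<^sup>2 * \<alpha>\<^sup>2 / 4 * \<mu>1\<^sup>2"
  proof -
    have "K * (3/4) \<le> (5 * d1 * L + 3/2 * L + d2 * L) / 4"
    proof -
      have "5 * L \<le> 5 * d1 * L" using pos L0 by simp
      moreover have "L \<le> d2 * L" using pos L0 by simp
      ultimately show ?thesis using Kb L0 by argo
    qed
    moreover have "l\<^sup>2 \<le> L\<^sup>2" by (rule lL2)
    ultimately have "K * (3/4) * (\<alpha>\<^sup>2 * d1\<^sup>2 * \<mu>1\<^sup>2) * l\<^sup>2 \<le> (5 * d1 * L + 3/2 * L + d2 * L) / 4 * (\<alpha>\<^sup>2 * d1\<^sup>2 * \<mu>1\<^sup>2) * L\<^sup>2"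
      using K0 pos by (intro mult_mono) auto
    then show ?thesis by (simp add: algebra_simps)
  qed
  have f3: "5/32 * \<beta> * d2\<^sup>2 * l\<^sup>2 * \<mu>2\<^sup>2 \<le> 3 * d2\<^sup>2 * L\<^sup>2 * \<beta> / 16 * \<mu>2\<^sup>2"
  proof -
    have "5/32 * (\<beta> * d2\<^sup>2 * \<mu>2\<^sup>2) * l\<^sup>2 \<le> 3/16 * (\<beta> * d2\<^sup>2 * \<mu>2\<^sup>2) * L\<^sup>2"
      using lL2 pos by (intro mult_mono) auto
    then show ?thesis by (simp add: algebra_simps)
  qed
  have split: "(5 * d1 * L + 3 / (2 * \<alpha>) + 3/2 * L + d2 * L) * d1\<^sup>2 * L\<^sup>2 * \<alpha>\<^sup>2 / 4 * \<mu>1\<^sup>2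
      = (5 * d1 * L + 3/2 * L + d2 * L) * d1\<^sup>2 * L\<^sup>2 * \<alpha>\<^sup>2 / 4 * \<mu>1\<^sup>2 + 3 / (2 * \<alpha>) * d1\<^sup>2 * L\<^sup>2 * \<alpha>\<^sup>2 / 4 * \<mu>1\<^sup>2"
    by (simp add: algebra_simps)
  have e: "\<alpha> * (A\<^sup>2 / 4 - 11/16 * E\<^sup>2) = \<alpha> / 4 * A\<^sup>2 - \<alpha> * (11/16 * E\<^sup>2)" by (simp add: algebra_simps)
  show ?thesis unfolding split using main f1 f2 f3 e by argo
qed



lemma alg_v:
  fixes \<beta> l d2 \<mu>2 h I1 I2 R :: real
  assumes "\<beta> > 0" "l > 0" "d2 \<ge> 1" "\<mu>2 > 0" "h \<ge> 0" and lbd: "l * \<beta> * d2 \<le> 1/4"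
    and I1: "I1 \<ge> h\<^sup>2 - h * (d2 * l * \<mu>2 / 2)"
    and I2: "I2 \<le> 2 * d2 * h\<^sup>2 + 2 * d2\<^sup>2 * l\<^sup>2 * \<mu>2\<^sup>2 / 4"
    and R: "R \<ge> \<beta> * I1 - l / 2 * \<beta>\<^sup>2 * I2"
  shows "R \<ge> \<beta> / 2 * h\<^sup>2 - 5/16 * \<beta> * d2\<^sup>2 * l\<^sup>2 * \<mu>2\<^sup>2"
proof -
  have a1: "\<beta> * I1 \<ge> \<beta> * (h\<^sup>2 - h * (d2 * l * \<mu>2 / 2))" using I1 assms by (intro mult_left_mono) auto
  have a2: "l / 2 * \<beta>\<^sup>2 * I2 \<le> l / 2 * \<beta>\<^sup>2 * (2 * d2 * h\<^sup>2 + 2 * d2\<^sup>2 * l\<^sup>2 * \<mu>2\<^sup>2 / 4)"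
    using I2 assms by (intro mult_left_mono) auto
  have a3: "l / 2 * \<beta>\<^sup>2 * (2 * d2 * h\<^sup>2 + 2 * d2\<^sup>2 * l\<^sup>2 * \<mu>2\<^sup>2 / 4)
        = (l * \<beta> * d2) * (\<beta> * h\<^sup>2) + (l * \<beta> * d2) * (\<beta> * d2 * l\<^sup>2 * \<mu>2\<^sup>2 / 4)"
    by (simp add: power2_eq_square algebra_simps)
  have a4: "(l * \<beta> * d2) * (\<beta> * h\<^sup>2) \<le> 1/4 * (\<beta> * h\<^sup>2)" using lbd assms by (intro mult_right_mono) auto
  have a5: "(l * \<beta> * d2) * (\<beta> * d2 * l\<^sup>2 * \<mu>2\<^sup>2 / 4) \<le> 1/4 * (\<beta> * d2 * l\<^sup>2 * \<mu>2\<^sup>2 / 4)"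
    using lbd assms by (intro mult_right_mono) auto
  have a6: "\<beta> * d2 * l\<^sup>2 * \<mu>2\<^sup>2 \<le> \<beta> * d2\<^sup>2 * l\<^sup>2 * \<mu>2\<^sup>2"
  proof -
    have "d2 \<le> d2\<^sup>2" using assms by (simp add: power2_eq_square)
    then show ?thesis using assms by (intro mult_right_mono mult_left_mono) auto
  qed
  have a7: "h * (d2 * l * \<mu>2) \<le> h\<^sup>2 / 2 + (d2 * l * \<mu>2)\<^sup>2 / 2"
  proof -
    have "0 \<le> (h - d2 * l * \<mu>2)\<^sup>2 / 2" by simp
    then show ?thesis by (simp add: power2_eq_square algebra_simps)
  qed
  have a8: "\<beta> * (h * (d2 * l * \<mu>2)) \<le> \<beta> * (h\<^sup>2 / 2 + (d2 * l * \<mu>2)\<^sup>2 / 2)"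
    using a7 assms by (intro mult_left_mono) auto
  have e1: "\<beta> * (h\<^sup>2 - h * (d2 * l * \<mu>2 / 2)) = \<beta> * h\<^sup>2 - 1/2 * (\<beta> * (h * (d2 * l * \<mu>2)))"
    by (simp add: algebra_simps)
  have e2: "\<beta> * (h\<^sup>2 / 2 + (d2 * l * \<mu>2)\<^sup>2 / 2) = 1/2 * (\<beta> * h\<^sup>2) + 1/2 * (\<beta> * d2\<^sup>2 * l\<^sup>2 * \<mu>2\<^sup>2)"
    by (simp add: power2_eq_square algebra_simps)
  have e3: "\<beta> / 2 * h\<^sup>2 = 1/2 * (\<beta> * h\<^sup>2)" by simp
  have e4: "5/16 * \<beta> * d2\<^sup>2 * l\<^sup>2 * \<mu>2\<^sup>2 = 5/16 * (\<beta> * d2\<^sup>2 * l\<^sup>2 * \<mu>2\<^sup>2)" by simp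
  have e5: "1/4 * (\<beta> * d2 * l\<^sup>2 * \<mu>2\<^sup>2 / 4) = 1/16 * (\<beta> * d2 * l\<^sup>2 * \<mu>2\<^sup>2)" by simp
  show ?thesis using R a1 a2 a3 a4 a5 a6 a8 e1 e2 e3 e4 e5 by argo
qed

locale agda = minmax f \<mu> l for f :: "'a::euclidean_space \<Rightarrow> 'b::euclidean_space \<Rightarrow> real" and \<mu> l +
  fixes \<alpha> \<beta> \<mu>1 \<mu>2 :: real
  assumes alpha_pos: "\<alpha> > 0" and beta_pos: "\<beta> > 0" and mu1_pos: "\<mu>1 > 0" and mu2_pos: "\<mu>2 > 0"
    and beta_le: "\<beta> \<le> 1 / (4 * real DIM('b) * (l + l\<^sup>2 / (2 * \<mu>)))"
    and alpha_le: "\<alpha> \<le> min (\<beta> / (32 * (l / \<mu>)\<^sup>2)) (1 / (10 * real DIM('a) * (l + l\<^sup>2 / (2 * \<mu>))))"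
begin

definition sx :: "'a \<Rightarrow> 'b \<Rightarrow> 'a \<Rightarrow> real" where
  "sx x y u = (f (x + \<mu>1 *\<^sub>R u) y - f x y) / (\<mu>1 / real DIM('a))"
definition xn :: "'a \<Rightarrow> 'b \<Rightarrow> 'a \<Rightarrow> 'a" where
  "xn x y u = x - (\<alpha> * sx x y u) *\<^sub>R u"
definition ty :: "'a \<Rightarrow> 'b \<Rightarrow> 'b \<Rightarrow> real" where
  "ty x' y v = (f x' (y + \<mu>2 *\<^sub>R v) - f x' y) / (\<mu>2 / real DIM('b))"
definition yn :: "'a \<Rightarrow> 'b \<Rightarrow> 'a \<Rightarrow> 'b \<Rightarrow> 'b" where
  "yn x y u v = y + (\<beta> * ty (xn x y u) y v) *\<^sub>R v"
definition Vf :: "'a \<Rightarrow> 'b \<Rightarrow> real" where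
  "Vf x y = 3/2 * Phi f x - 1/2 * f x y"
definition Dst :: "'a \<Rightarrow> 'b \<Rightarrow> 'a \<times> 'b \<Rightarrow> real" where
  "Dst x y p = Vf x y - Vf (xn x y (fst p)) (yn x y (fst p) (snd p))"

definition Lc :: real where "Lc = l + l\<^sup>2 / (2 * \<mu>)"

lemma Lc_ge: "l \<le> Lc" unfolding Lc_def using mu_pos by simp
lemma Lc_pos: "Lc > 0" using Lc_ge l_pos by linarith

lemma lbd: "l * \<beta> * real DIM('b) \<le> 1/4"
proof -
  have "\<beta> * (4 * real DIM('b) * Lc) \<le> 1"
    using beta_le Lc_pos unfolding Lc_def[symmetric] by (simp add: pos_le_divide_eq)
  moreover have "l * \<beta> * real DIM('b) \<le> Lc * \<beta> * real DIM('b)"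
    using Lc_ge beta_pos by (intro mult_right_mono) auto
  ultimately show ?thesis by (simp add: algebra_simps)
qed

lemma dif_x: "(\<lambda>x. f x y) differentiable (at z)" by (rule diff_x)
lemma dif_y: "(\<lambda>y. f x y) differentiable (at z)" by (rule diff_y)
lemma lipx': "norm (grad (\<lambda>x. f x y) z - grad (\<lambda>x. f x y) w) \<le> l * norm (z - w)"
  using gx_lip[of z y w y] unfolding gx_def by simp
lemma lipy': "norm (grad (\<lambda>y. f x y) z - grad (\<lambda>y. f x y) w) \<le> l * norm (z - w)"
  using gy_lip[of x z x w] unfolding gy_def by simp

lemma ty_zs: "ty x' y v = zs (\<lambda>y. f x' y) y \<mu>2 v"
  unfolding ty_def by (subst zs_def[OF dif_y lipy' mu2_pos less_imp_le[OF l_pos]]) simp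
lemma sx_zs: "sx x y u = zs (\<lambda>x. f x y) x \<mu>1 u"
  unfolding sx_def by (subst zs_def[OF dif_x lipx' mu1_pos less_imp_le[OF l_pos]]) simp

lemma ty_cont: "continuous_on UNIV (ty x' y)"
  unfolding ty_def using mu2_pos by (intro continuous_intros) auto
lemma sx_cont: "continuous_on UNIV (sx x y)"
  unfolding sx_def using mu1_pos by (intro continuous_intros) auto

lemma inner_v:
  "(\<integral>v. f x1 (y + (\<beta> * ty x1 y v) *\<^sub>R v) - f x1 y \<partial>unif_sphere)
     \<ge> \<beta> / 2 * (norm (gy x1 y))\<^sup>2 - 5/16 * \<beta> * (real DIM('b))\<^sup>2 * l\<^sup>2 * \<mu>2\<^sup>2"
proof -
  interpret prob_space "unif_sphere :: 'b measure" by (rule prob_space_unif_sphere)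
  define H1 where "H1 = gy x1 y"
  define t where "t = ty x1 y"
  have tc: "continuous_on UNIV t" unfolding t_def by (rule ty_cont)
  have i1: "integrable unif_sphere (\<lambda>v. f x1 (y + (\<beta> * t v) *\<^sub>R v) - f x1 y)"
    by (rule integrable_sphere_cont) (intro continuous_intros tc)
  have i2: "integrable unif_sphere (\<lambda>v. \<beta> * (t v * (H1 \<bullet> v)) - l / 2 * \<beta>\<^sup>2 * (t v)\<^sup>2)"
    by (rule integrable_sphere_cont) (intro continuous_intros tc)
  have "(\<integral>v. f x1 (y + (\<beta> * t v) *\<^sub>R v) - f x1 y \<partial>unif_sphere)
      \<ge> (\<integral>v. \<beta> * (t v * (H1 \<bullet> v)) - l / 2 * \<beta>\<^sup>2 * (t v)\<^sup>2 \<partial>unif_sphere)"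
  proof (rule integral_mono_AE[OF i2 i1])
    show "AE v in unif_sphere. \<beta> * (t v * (H1 \<bullet> v)) - l / 2 * \<beta>\<^sup>2 * (t v)\<^sup>2 \<le> f x1 (y + (\<beta> * t v) *\<^sub>R v) - f x1 y"
      using AE_sphere_norm
    proof eventually_elim
      case (elim v)
      have q: "\<bar>f x1 (y + (\<beta> * t v) *\<^sub>R v) - f x1 y - gy x1 y \<bullet> ((y + (\<beta> * t v) *\<^sub>R v) - y)\<bar>
          \<le> l / 2 * (norm ((y + (\<beta> * t v) *\<^sub>R v) - y))\<^sup>2" by (rule quad_y)
      have eq1: "gy x1 y \<bullet> ((y + (\<beta> * t v) *\<^sub>R v) - y) = \<beta> * (t v * (H1 \<bullet> v))" unfolding H1_def by simp
      have eq2: "(norm ((y + (\<beta> * t v) *\<^sub>R v) - y))\<^sup>2 = \<beta>\<^sup>2 * (t v)\<^sup>2"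
        using elim by (simp add: power_mult_distrib)
      show ?case using q unfolding eq1 eq2 abs_le_iff by linarith
    qed
  qed
  also have "(\<integral>v. \<beta> * (t v * (H1 \<bullet> v)) - l / 2 * \<beta>\<^sup>2 * (t v)\<^sup>2 \<partial>unif_sphere)
      = \<beta> * (\<integral>v. t v * (H1 \<bullet> v) \<partial>unif_sphere) - l / 2 * \<beta>\<^sup>2 * (\<integral>v. (t v)\<^sup>2 \<partial>unif_sphere)"
  proof -
    have ia: "integrable unif_sphere (\<lambda>v. t v * (H1 \<bullet> v))"
      by (rule integrable_sphere_cont) (intro continuous_intros tc)
    have ib: "integrable unif_sphere (\<lambda>v. (t v)\<^sup>2)"
      by (rule integrable_sphere_cont) (intro continuous_intros tc)
    show ?thesis using ia ib by simp
  qed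
  finally have R: "\<beta> * (\<integral>v. t v * (H1 \<bullet> v) \<partial>unif_sphere) - l / 2 * \<beta>\<^sup>2 * (\<integral>v. (t v)\<^sup>2 \<partial>unif_sphere)
      \<le> (\<integral>v. f x1 (y + (\<beta> * t v) *\<^sub>R v) - f x1 y \<partial>unif_sphere)" .
  have z1: "\<bar>(\<integral>v. t v * (H1 \<bullet> v) \<partial>unif_sphere) - H1 \<bullet> H1\<bar> \<le> norm H1 * (real DIM('b) * l * \<mu>2 / 2)"
    using zo_first[OF dif_y lipy' mu2_pos less_imp_le[OF l_pos], of x1 y H1]
    unfolding t_def ty_zs[abs_def] H1_def gy_def by simp
  have z2: "(\<integral>v. (t v)\<^sup>2 \<partial>unif_sphere) \<le> (1 + 1) * real DIM('b) * (norm H1)\<^sup>2 + (1 + 1 / 1) * (real DIM('b))\<^sup>2 * l\<^sup>2 * \<mu>2\<^sup>2 / 4"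
    using zo_second[OF dif_y lipy' mu2_pos less_imp_le[OF l_pos], of 1 x1 y]
    unfolding t_def ty_zs[abs_def] H1_def gy_def by simp
  have I1: "(\<integral>v. t v * (H1 \<bullet> v) \<partial>unif_sphere) \<ge> (norm H1)\<^sup>2 - norm H1 * (real DIM('b) * l * \<mu>2 / 2)"
    using z1 unfolding power2_norm_eq_inner abs_le_iff by linarith
  have I2: "(\<integral>v. (t v)\<^sup>2 \<partial>unif_sphere) \<le> 2 * real DIM('b) * (norm H1)\<^sup>2 + 2 * (real DIM('b))\<^sup>2 * l\<^sup>2 * \<mu>2\<^sup>2 / 4"
    using z2 by simp
  have "(\<integral>v. f x1 (y + (\<beta> * t v) *\<^sub>R v) - f x1 y \<partial>unif_sphere) \<ge> \<beta> / 2 * (norm H1)\<^sup>2 - 5/16 * \<beta> * (real DIM('b))\<^sup>2 * l\<^sup>2 * \<mu>2\<^sup>2"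
    by (rule alg_v[OF beta_pos l_pos _ mu2_pos norm_ge_zero lbd I1 I2 R]) simp
  then show ?thesis unfolding t_def H1_def .
qed

end



context agda
begin

definition Kc :: real where "Kc = 3/4 * LPhi + l / 4 + \<beta> * l\<^sup>2 / 4"

lemma Kc_nonneg: "Kc \<ge> 0"
  unfolding Kc_def LPhi_def cEB_def using l_pos mu_pos beta_pos by (simp add: add_nonneg_nonneg)

lemma Dst_split:
  "Dst x y (u, v) = (3/2 * (Phi f x - Phi f (xn x y u)) - 1/2 * (f x y - f (xn x y u) y))
      + 1/2 * (f (xn x y u) (y + (\<beta> * ty (xn x y u) y v) *\<^sub>R v) - f (xn x y u) y)"
  unfolding Dst_def Vf_def yn_def by (simp add: algebra_simps)

lemma int_v:
  "(\<integral>v. Dst x y (u, v) \<partial>unif_sphere) = (3/2 * (Phi f x - Phi f (xn x y u)) - 1/2 * (f x y - f (xn x y u) y))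
      + 1/2 * (\<integral>v. f (xn x y u) (y + (\<beta> * ty (xn x y u) y v) *\<^sub>R v) - f (xn x y u) y \<partial>unif_sphere)"
proof -
  interpret prob_space "unif_sphere :: 'b measure" by (rule prob_space_unif_sphere)
  define x1 where "x1 = xn x y u"
  define c where "c = 3/2 * (Phi f x - Phi f x1) - 1/2 * (f x y - f x1 y)"
  define g where "g = (\<lambda>v. f x1 (y + (\<beta> * ty x1 y v) *\<^sub>R v) - f x1 y)"
  have ig: "integrable unif_sphere g" unfolding g_def
    by (rule integrable_sphere_cont) (intro continuous_intros ty_cont)
  have "(\<integral>v. Dst x y (u, v) \<partial>unif_sphere) = (\<integral>v. c + 1/2 * g v \<partial>unif_sphere)"
    unfolding Dst_split c_def g_def x1_def ..
  also have "\<dots> = (\<integral>v. c \<partial>(unif_sphere :: 'b measure)) + (\<integral>v. 1/2 * g v \<partial>unif_sphere)"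
    by (rule Bochner_Integration.integral_add) (use ig in auto)
  also have "\<dots> = c + 1/2 * (\<integral>v. g v \<partial>unif_sphere)"
  proof -
    have "prob UNIV = 1" using prob_space by simp
    then show ?thesis by simp
  qed
  finally show ?thesis unfolding c_def g_def x1_def .
qed

lemma lower_u:
  assumes u: "norm u = 1"
  shows "(\<integral>v. Dst x y (u, v) \<partial>unif_sphere)
    \<ge> \<alpha> * (sx x y u * (((3/2) *\<^sub>R grad (Phi f) x - (1/2) *\<^sub>R gx x y) \<bullet> u)) - Kc * \<alpha>\<^sup>2 * (sx x y u)\<^sup>2
       + \<beta> / 8 * (norm (gy x y))\<^sup>2 - 5/32 * \<beta> * (real DIM('b))\<^sup>2 * l\<^sup>2 * \<mu>2\<^sup>2"
proof -
  define x1 where "x1 = xn x y u"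
  define s where "s = sx x y u"
  define a where "a = grad (Phi f) x"
  define G where "G = gx x y"
  define H where "H = gy x y"
  define H1 where "H1 = gy x1 y"
  have dx: "x1 - x = - ((\<alpha> * s) *\<^sub>R u)" unfolding x1_def xn_def s_def by simp
  have nx: "(norm (x1 - x))\<^sup>2 = \<alpha>\<^sup>2 * s\<^sup>2" unfolding dx using u by (simp add: power_mult_distrib)
  have ax: "a \<bullet> (x1 - x) = - (\<alpha> * s * (a \<bullet> u))" unfolding dx by simp
  have gx': "G \<bullet> (x1 - x) = - (\<alpha> * s * (G \<bullet> u))" unfolding dx by simp
  have P1: "Phi f x1 \<le> Phi f x - \<alpha> * s * (a \<bullet> u) + LPhi / 2 * (\<alpha>\<^sup>2 * s\<^sup>2)"
    using Phi_descent[of x1 x] unfolding a_def[symmetric] ax nx by simp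
  have F1: "f x1 y \<ge> f x y - \<alpha> * s * (G \<bullet> u) - l / 2 * (\<alpha>\<^sup>2 * s\<^sup>2)"
    using quad_x[of x1 y x] unfolding G_def[symmetric] gx' nx abs_le_iff by linarith
  have iv: "(\<integral>v. f x1 (y + (\<beta> * ty x1 y v) *\<^sub>R v) - f x1 y \<partial>unif_sphere)
     \<ge> \<beta> / 2 * (norm H1)\<^sup>2 - 5/16 * \<beta> * (real DIM('b))\<^sup>2 * l\<^sup>2 * \<mu>2\<^sup>2"
    unfolding H1_def by (rule inner_v)
  have HH: "(norm H)\<^sup>2 \<le> 2 * (norm H1)\<^sup>2 + 2 * (l\<^sup>2 * (\<alpha>\<^sup>2 * s\<^sup>2))"
  proof -
    have "norm (H - H1) \<le> l * (norm (x - x1) + norm (y - y))" unfolding H_def H1_def by (rule gy_lip)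
    then have "norm (H - H1) \<le> l * norm (x1 - x)" by (simp add: norm_minus_commute)
    then have "(norm (H - H1))\<^sup>2 \<le> (l * norm (x1 - x))\<^sup>2" by (simp add: power_mono)
    also have "\<dots> = l\<^sup>2 * (\<alpha>\<^sup>2 * s\<^sup>2)" by (simp add: power_mult_distrib nx)
    finally have a: "(norm (H - H1))\<^sup>2 \<le> l\<^sup>2 * (\<alpha>\<^sup>2 * s\<^sup>2)" .
    have "norm H \<le> norm H1 + norm (H - H1)" using norm_triangle_sub[of H H1] by simp
    then have "(norm H)\<^sup>2 \<le> (norm H1 + norm (H - H1))\<^sup>2" by (simp add: power_mono)
    also have "\<dots> \<le> 2 * (norm H1)\<^sup>2 + 2 * (norm (H - H1))\<^sup>2"
    proof -
      have "0 \<le> (norm H1 - norm (H - H1))\<^sup>2" by simp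
      then show ?thesis by (simp add: power2_eq_square algebra_simps)
    qed
    finally show ?thesis using a by linarith
  qed
  have bH: "\<beta> / 4 * (norm H1)\<^sup>2 \<ge> \<beta> / 8 * (norm H)\<^sup>2 - \<beta> / 4 * (l\<^sup>2 * (\<alpha>\<^sup>2 * s\<^sup>2))"
  proof -
    have "\<beta> / 8 * (norm H)\<^sup>2 \<le> \<beta> / 8 * (2 * (norm H1)\<^sup>2 + 2 * (l\<^sup>2 * (\<alpha>\<^sup>2 * s\<^sup>2)))"
      using HH beta_pos by (intro mult_left_mono) auto
    then show ?thesis by (simp add: algebra_simps)
  qed
  have wu: "((3/2) *\<^sub>R a - (1/2) *\<^sub>R G) \<bullet> u = 3/2 * (a \<bullet> u) - 1/2 * (G \<bullet> u)"
    by (simp add: inner_diff_left)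
  have e1: "\<alpha> * (s * (3/2 * (a \<bullet> u) - 1/2 * (G \<bullet> u))) = 3/2 * (\<alpha> * s * (a \<bullet> u)) - 1/2 * (\<alpha> * s * (G \<bullet> u))"
    by (simp add: algebra_simps)
  have e2: "Kc * \<alpha>\<^sup>2 * s\<^sup>2 = 3/4 * LPhi * (\<alpha>\<^sup>2 * s\<^sup>2) + l / 4 * (\<alpha>\<^sup>2 * s\<^sup>2) + \<beta> / 4 * (l\<^sup>2 * (\<alpha>\<^sup>2 * s\<^sup>2))"
    unfolding Kc_def by (simp add: algebra_simps)
  have e3: "LPhi / 2 * (\<alpha>\<^sup>2 * s\<^sup>2) * (3/2) = 3/4 * LPhi * (\<alpha>\<^sup>2 * s\<^sup>2)" by simp
  have e4: "l / 2 * (\<alpha>\<^sup>2 * s\<^sup>2) * (1/2) = l / 4 * (\<alpha>\<^sup>2 * s\<^sup>2)" by simp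
  have e5: "1/2 * (\<beta> / 2 * (norm H1)\<^sup>2 - 5/16 * \<beta> * (real DIM('b))\<^sup>2 * l\<^sup>2 * \<mu>2\<^sup>2)
      = \<beta> / 4 * (norm H1)\<^sup>2 - 5/32 * \<beta> * (real DIM('b))\<^sup>2 * l\<^sup>2 * \<mu>2\<^sup>2" by simp
  have ivh: "1/2 * (\<integral>v. f x1 (y + (\<beta> * ty x1 y v) *\<^sub>R v) - f x1 y \<partial>unif_sphere)
      \<ge> 1/2 * (\<beta> / 2 * (norm H1)\<^sup>2 - 5/16 * \<beta> * (real DIM('b))\<^sup>2 * l\<^sup>2 * \<mu>2\<^sup>2)"
    using iv by (intro mult_left_mono) auto
  have P1': "3/2 * (Phi f x - Phi f x1) \<ge> 3/2 * (\<alpha> * s * (a \<bullet> u)) - LPhi / 2 * (\<alpha>\<^sup>2 * s\<^sup>2) * (3/2)"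
    using P1 by argo
  have F1': "- 1/2 * (f x y - f x1 y) \<ge> - 1/2 * (\<alpha> * s * (G \<bullet> u)) - l / 2 * (\<alpha>\<^sup>2 * s\<^sup>2) * (1/2)"
    using F1 by argo
  show ?thesis
    unfolding int_v x1_def[symmetric] s_def[symmetric] a_def[symmetric] G_def[symmetric] H_def[symmetric] wu e1 e2
    using P1' F1' ivh e3 e4 e5 bH by argo
qed


lemma Dst_cont: "continuous_on UNIV (Dst x y)"
  unfolding Dst_def Vf_def xn_def yn_def ty_def sx_def using mu1_pos mu2_pos
  by (intro continuous_intros) auto

lemma one_step:
  "(\<integral>p. Dst x y p \<partial>(unif_sphere \<Otimes>\<^sub>M unif_sphere))
     \<ge> \<alpha> / 4 * (norm (grad (Phi f) x))\<^sup>2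
       - (5 * real DIM('a) * Lc + 3 / (2 * \<alpha>) + 3/2 * Lc + real DIM('b) * Lc) * (real DIM('a))\<^sup>2 * Lc\<^sup>2 * \<alpha>\<^sup>2 / 4 * \<mu>1\<^sup>2
       - 3 * (real DIM('b))\<^sup>2 * Lc\<^sup>2 * \<beta> / 16 * \<mu>2\<^sup>2"
proof -
  interpret prob_space "unif_sphere :: 'a measure" by (rule prob_space_unif_sphere)
  define a where "a = grad (Phi f) x"
  define G where "G = gx x y"
  define H where "H = gy x y"
  define w where "w = (3/2) *\<^sub>R a - (1/2) *\<^sub>R G"
  define d1 where "d1 = real DIM('a)"
  define d2 where "d2 = real DIM('b)"
  define C where "C = \<beta> / 8 * (norm H)\<^sup>2 - 5/32 * \<beta> * d2\<^sup>2 * l\<^sup>2 * \<mu>2\<^sup>2"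
  define low where "low = (\<lambda>u. \<alpha> * (sx x y u * (w \<bullet> u)) - Kc * \<alpha>\<^sup>2 * (sx x y u)\<^sup>2 + C)"
  have iD: "integrable (unif_sphere \<Otimes>\<^sub>M unif_sphere) (Dst x y)"
    by (rule integrable_pair_cont[OF Dst_cont])
  have fub: "(\<integral>p. Dst x y p \<partial>(unif_sphere \<Otimes>\<^sub>M unif_sphere)) = (\<integral>u. (\<integral>v. Dst x y (u, v) \<partial>unif_sphere) \<partial>unif_sphere)"
    by (rule pair_sigma_finite.integral_fst'[OF sphere_pair_sigma_finite iD, symmetric])
  have iU: "integrable unif_sphere (\<lambda>u. \<integral>v. Dst x y (u, v) \<partial>unif_sphere)"
    by (rule pair_sigma_finite.integrable_fst'[OF sphere_pair_sigma_finite iD])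
  have ilow: "integrable unif_sphere low" unfolding low_def
    by (rule integrable_sphere_cont) (intro continuous_intros sx_cont)
  have "(\<integral>u. low u \<partial>unif_sphere) \<le> (\<integral>u. (\<integral>v. Dst x y (u, v) \<partial>unif_sphere) \<partial>unif_sphere)"
  proof (rule integral_mono_AE[OF ilow iU])
    show "AE u in unif_sphere. low u \<le> (\<integral>v. Dst x y (u, v) \<partial>unif_sphere)"
      using AE_sphere_norm
    proof eventually_elim
      case (elim u)
      show ?case using lower_u[OF elim, of x y] unfolding low_def C_def w_def a_def G_def H_def d2_def by argo
    qed
  qed
  then have LB0: "(\<integral>p. Dst x y p \<partial>(unif_sphere \<Otimes>\<^sub>M unif_sphere)) \<ge> (\<integral>u. low u \<partial>unif_sphere)"
    unfolding fub .
  have is1: "integrable unif_sphere (\<lambda>u. sx x y u * (w \<bullet> u))"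
    by (rule integrable_sphere_cont) (intro continuous_intros sx_cont)
  have is2: "integrable unif_sphere (\<lambda>u. (sx x y u)\<^sup>2)"
    by (rule integrable_sphere_cont) (intro continuous_intros sx_cont)
  have lowint: "(\<integral>u. low u \<partial>unif_sphere) = \<alpha> * (\<integral>u. sx x y u * (w \<bullet> u) \<partial>unif_sphere) - Kc * \<alpha>\<^sup>2 * (\<integral>u. (sx x y u)\<^sup>2 \<partial>unif_sphere) + C"
  proof -
    have "prob UNIV = 1" using prob_space by simp
    then show ?thesis unfolding low_def using is1 is2 by simp
  qed
  have z1: "\<bar>(\<integral>u. sx x y u * (w \<bullet> u) \<partial>unif_sphere) - G \<bullet> w\<bar> \<le> norm w * (d1 * l * \<mu>1 / 2)"
    using zo_first[OF dif_x lipx' mu1_pos less_imp_le[OF l_pos], of y x w]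
    unfolding sx_zs[abs_def] G_def gx_def d1_def by simp
  have z2: "(\<integral>u. (sx x y u)\<^sup>2 \<partial>unif_sphere) \<le> (1 + 1/2) * d1 * (norm G)\<^sup>2 + (1 + 1 / (1/2)) * d1\<^sup>2 * l\<^sup>2 * \<mu>1\<^sup>2 / 4"
    using zo_second[OF dif_x lipx' mu1_pos less_imp_le[OF l_pos], of "1/2" y x]
    unfolding sx_zs[abs_def] G_def gx_def d1_def by simp
  have t1: "\<alpha> * (\<integral>u. sx x y u * (w \<bullet> u) \<partial>unif_sphere) \<ge> \<alpha> * (w \<bullet> G - norm w * (d1 * l * \<mu>1 / 2))"
  proof -
    have "(\<integral>u. sx x y u * (w \<bullet> u) \<partial>unif_sphere) \<ge> w \<bullet> G - norm w * (d1 * l * \<mu>1 / 2)"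
      using z1 unfolding abs_le_iff by (simp add: inner_commute)
    then show ?thesis using alpha_pos by (intro mult_left_mono) auto
  qed
  have t2: "Kc * \<alpha>\<^sup>2 * (\<integral>u. (sx x y u)\<^sup>2 \<partial>unif_sphere) \<le> Kc * \<alpha>\<^sup>2 * (3/2 * d1 * (norm G)\<^sup>2 + 3/4 * d1\<^sup>2 * l\<^sup>2 * \<mu>1\<^sup>2)"
  proof -
    have "(\<integral>u. (sx x y u)\<^sup>2 \<partial>unif_sphere) \<le> 3/2 * d1 * (norm G)\<^sup>2 + 3/4 * d1\<^sup>2 * l\<^sup>2 * \<mu>1\<^sup>2"
      using z2 by simp
    then show ?thesis using Kc_nonneg by (intro mult_left_mono) auto
  qed
  have LB: "(\<integral>p. Dst x y p \<partial>(unif_sphere \<Otimes>\<^sub>M unif_sphere))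
      \<ge> \<alpha> * (w \<bullet> G - norm w * (d1 * l * \<mu>1 / 2)) - Kc * \<alpha>\<^sup>2 * (3/2 * d1 * (norm G)\<^sup>2 + 3/4 * d1\<^sup>2 * l\<^sup>2 * \<mu>1\<^sup>2)
         + \<beta> / 8 * (norm H)\<^sup>2 - 5/32 * \<beta> * d2\<^sup>2 * l\<^sup>2 * \<mu>2\<^sup>2"
    using LB0 lowint t1 t2 unfolding C_def by linarith
  have al: "\<alpha> \<le> \<beta> / (32 * (l / \<mu>)\<^sup>2)" "\<alpha> \<le> 1 / (10 * d1 * Lc)"
    using alpha_le unfolding Lc_def[symmetric] d1_def by auto
  have bl: "\<beta> \<le> 1 / (4 * d2 * Lc)" using beta_le unfolding Lc_def[symmetric] d2_def .
  have Pb: "\<bar>a \<bullet> (G - a)\<bar> \<le> norm a * norm (G - a)" by (rule Cauchy_Schwarz_ineq2)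
  have Dn: "norm (G - a) \<le> 12 / 11 * l / \<mu> * norm H"
    using grad_Phi_near[of x y] unfolding a_def[symmetric] G_def[symmetric] H_def[symmetric] cEB_def
    by (simp add: norm_minus_commute)
  have Gn: "(norm G)\<^sup>2 = (norm a)\<^sup>2 + 2 * (a \<bullet> (G - a)) + (norm (G - a))\<^sup>2"
    by (simp add: power2_norm_eq_inner inner_diff_left inner_diff_right inner_commute algebra_simps)
  have Kd: "Kc = 3/4 * (l + 12 / 11 * l\<^sup>2 / \<mu>) + l / 4 + \<beta> * l\<^sup>2 / 4"
    unfolding Kc_def LPhi_def cEB_def by simp
  have wG: "w \<bullet> G = (norm a)\<^sup>2 + (a \<bullet> (G - a)) / 2 - (norm (G - a))\<^sup>2 / 2"
    unfolding w_def by (simp add: power2_norm_eq_inner inner_diff_left inner_diff_right inner_commute field_simps)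
  have wn: "norm w \<le> norm a + norm (G - a) / 2"
  proof -
    have h: "(3/2::real) *\<^sub>R a = a + (1/2) *\<^sub>R a"
    proof -
      have "(3/2::real) *\<^sub>R a = (1 + 1/2) *\<^sub>R a" by simp
      also have "\<dots> = a + (1/2) *\<^sub>R a" by (simp only: scaleR_add_left scaleR_one)
      finally show ?thesis .
    qed
    have "w = a - (1/2) *\<^sub>R (G - a)" unfolding w_def h by (simp add: algebra_simps)
    then have "norm w \<le> norm a + norm ((1/2) *\<^sub>R (G - a))" using norm_triangle_ineq4 by metis
    then show ?thesis by simp
  qed
  have "(\<integral>p. Dst x y p \<partial>(unif_sphere \<Otimes>\<^sub>M unif_sphere))
     \<ge> \<alpha> / 4 * (norm a)\<^sup>2 - (5 * d1 * Lc + 3 / (2 * \<alpha>) + 3/2 * Lc + d2 * Lc) * d1\<^sup>2 * Lc\<^sup>2 * \<alpha>\<^sup>2 / 4 * \<mu>1\<^sup>2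
             - 3 * d2\<^sup>2 * Lc\<^sup>2 * \<beta> / 16 * \<mu>2\<^sup>2"
    by (rule final_alg[OF alpha_pos beta_pos mu_pos l_pos _ _ mu1_pos mu2_pos norm_ge_zero norm_ge_zero norm_ge_zero
          Lc_def bl al Pb Dn Gn Kd wG wn LB]) (simp_all add: d1_def d2_def)
  then show ?thesis unfolding a_def d1_def d2_def .
qed

end



abbreviation Mw :: "('a::euclidean_space \<times> 'b::euclidean_space) measure" where
  "Mw \<equiv> unif_sphere \<Otimes>\<^sub>M unif_sphere"

lemma Mw_prob: "prob_space (Mw :: ('a::euclidean_space \<times> 'b::euclidean_space) measure)"
  by (rule sphere_pair_prob)

lemma Mw_product_prob: "product_prob_space (\<lambda>_::nat. (Mw :: ('a::euclidean_space \<times> 'b::euclidean_space) measure))"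
proof -
  interpret prob_space "Mw :: ('a \<times> 'b) measure" by (rule Mw_prob)
  show ?thesis by unfold_locales
qed

lemma Mw_product_sf: "product_sigma_finite (\<lambda>_::nat. (Mw :: ('a::euclidean_space \<times> 'b::euclidean_space) measure))"
  using Mw_product_prob unfolding product_prob_space_def by blast

lemma PiM_prob: "prob_space (PiM J (\<lambda>_::nat. (Mw :: ('a::euclidean_space \<times> 'b::euclidean_space) measure)))"
proof -
  interpret product_prob_space "\<lambda>_::nat. (Mw :: ('a \<times> 'b) measure)" J by (rule Mw_product_prob)
  show ?thesis by (rule P.prob_space_axioms)
qed

definition Bset :: "('a::euclidean_space \<times> 'b::euclidean_space) set" where
  "Bset = cball 0 1 \<times> cball 0 1"

lemma Bset_compact: "compact Bset" unfolding Bset_def by (intro compact_Times compact_cball)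

lemma AE_Bset: "AE w in (Mw :: ('a::euclidean_space \<times> 'b::euclidean_space) measure). w \<in> Bset"
  using AE_sphere_pair by eventually_elim (auto simp: Bset_def mem_Times_iff)

lemma AE_PiM_Bset:
  assumes "finite S" "S \<subseteq> J"
  shows "AE \<omega> in PiM J (\<lambda>_::nat. (Mw :: ('a::euclidean_space \<times> 'b::euclidean_space) measure)). \<forall>i\<in>S. \<omega> i \<in> Bset"
proof (rule AE_finite_allI[OF assms(1)])
  fix i assume "i \<in> S"
  then have "i \<in> J" using assms by auto
  show "AE \<omega> in PiM J (\<lambda>_::nat. (Mw :: ('a \<times> 'b) measure)). \<omega> i \<in> Bset"
    by (rule AE_PiM_component[OF Mw_prob \<open>i \<in> J\<close> AE_Bset])
qed

lemma sets_Mw[simp]: "sets (Mw :: ('a::euclidean_space \<times> 'b::euclidean_space) measure) = sets borel"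
  by (rule sets_sphere_pair)

lemma transfer_restrict:
  fixes g :: "(nat \<Rightarrow> 'a::euclidean_space \<times> 'b::euclidean_space) \<Rightarrow> real"
  assumes J: "finite J" and g: "\<And>\<omega>. g (restrict \<omega> J) = g \<omega>"
    and gm: "g \<in> borel_measurable (PiM J (\<lambda>_. Mw))"
  shows "(\<integral>\<omega>. g \<omega> \<partial>PiM UNIV (\<lambda>_. Mw)) = (\<integral>\<omega>. g \<omega> \<partial>PiM J (\<lambda>_. Mw))"
proof -
  interpret product_prob_space "\<lambda>_::nat. (Mw :: ('a \<times> 'b) measure)" UNIV by (rule Mw_product_prob)
  have "(\<integral>\<omega>. g \<omega> \<partial>PiM UNIV (\<lambda>_. Mw)) = (\<integral>\<omega>. g (restrict \<omega> J) \<partial>PiM UNIV (\<lambda>_. Mw))"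
    using g by simp
  also have "\<dots> = (\<integral>\<omega>. g \<omega> \<partial>distr (PiM UNIV (\<lambda>_. Mw)) (PiM J (\<lambda>_. Mw)) (\<lambda>\<omega>. restrict \<omega> J))"
    by (rule integral_distr[symmetric, OF measurable_restrict_subset gm]) simp
  also have "\<dots> = (\<integral>\<omega>. g \<omega> \<partial>PiM J (\<lambda>_. Mw))"
    using distr_PiM_restrict_finite[OF J] by simp
  finally show ?thesis .
qed

context agda
begin

definition Sm :: "('a \<times> 'b) \<Rightarrow> ('a \<times> 'b) \<Rightarrow> 'a \<times> 'b" where
  "Sm p w = (xn (fst p) (snd p) (fst w), yn (fst p) (snd p) (fst w) (snd w))"

lemma Sm_cont: "continuous_on UNIV (\<lambda>q. Sm (fst q) (snd q))"
  unfolding Sm_def xn_def yn_def ty_def sx_def using mu1_pos mu2_pos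
  by (intro continuous_intros) auto

definition st :: "'a \<Rightarrow> 'b \<Rightarrow> (nat \<Rightarrow> 'a \<times> 'b) \<Rightarrow> nat \<Rightarrow> 'a \<times> 'b" where
  "st x0 y0 \<omega> s = zo_agda f \<alpha> \<beta> \<mu>1 \<mu>2 x0 y0 \<omega> s"

lemma st_0: "st x0 y0 \<omega> 0 = (x0, y0)" unfolding st_def by simp

lemma st_Suc: "st x0 y0 \<omega> (Suc s) = Sm (st x0 y0 \<omega> s) (\<omega> s)"
  unfolding st_def Sm_def xn_def yn_def sx_def ty_def by (simp add: Let_def)

lemma st_local: "(\<And>i. i < s \<Longrightarrow> \<omega> i = \<omega>' i) \<Longrightarrow> st x0 y0 \<omega> s = st x0 y0 \<omega>' s"
proof (induction s)
  case 0 then show ?case by (simp add: st_0)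
next
  case (Suc s) then show ?case by (simp add: st_Suc)
qed

lemma st_restrict: "{..<s} \<subseteq> J \<Longrightarrow> st x0 y0 (restrict \<omega> J) s = st x0 y0 \<omega> s"
  by (rule st_local) auto

lemma st_meas: "{..<s} \<subseteq> J \<Longrightarrow> (\<lambda>\<omega>. st x0 y0 \<omega> s) \<in> borel_measurable (PiM J (\<lambda>_. Mw))"
proof (induction s)
  case 0 then show ?case by (simp add: st_0)
next
  case (Suc s)
  have "{..<s} \<subseteq> J" using Suc.prems by auto
  then have IH: "(\<lambda>\<omega>. st x0 y0 \<omega> s) \<in> borel_measurable (PiM J (\<lambda>_. Mw))" by (rule Suc.IH)
  have sJ: "s \<in> J" using Suc.prems by auto
  have c: "(\<lambda>\<omega>. \<omega> s) \<in> measurable (PiM J (\<lambda>_. Mw)) (Mw :: ('a \<times> 'b) measure)"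
    by (rule measurable_component_singleton[OF sJ])
  have pr: "(\<lambda>\<omega>. (st x0 y0 \<omega> s, \<omega> s)) \<in> measurable (PiM J (\<lambda>_. Mw)) (borel \<Otimes>\<^sub>M (Mw :: ('a \<times> 'b) measure))"
    by (rule measurable_Pair[OF IH c])
  have "sets (borel \<Otimes>\<^sub>M (Mw :: ('a \<times> 'b) measure)) = sets (borel \<Otimes>\<^sub>M (borel :: ('a \<times> 'b) measure))"
    by (rule sets_pair_measure_cong[OF refl sets_sphere_pair])
  also have "\<dots> = sets (borel :: (('a \<times> 'b) \<times> ('a \<times> 'b)) measure)" by (subst borel_prod) rule
  finally have se: "sets (borel \<Otimes>\<^sub>M (Mw :: ('a \<times> 'b) measure)) = sets (borel :: (('a \<times> 'b) \<times> ('a \<times> 'b)) measure)" .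
  have "(\<lambda>q. Sm (fst q) (snd q)) \<in> borel_measurable (borel :: (('a \<times> 'b) \<times> ('a \<times> 'b)) measure)"
    by (rule borel_measurable_continuous_onI[OF Sm_cont])
  then have Smm: "(\<lambda>q. Sm (fst q) (snd q)) \<in> borel_measurable (borel \<Otimes>\<^sub>M (Mw :: ('a \<times> 'b) measure))"
    unfolding measurable_cong_sets[OF se refl] .
  have eq: "(\<lambda>\<omega>. st x0 y0 \<omega> (Suc s)) = (\<lambda>\<omega>. (\<lambda>q. Sm (fst q) (snd q)) (st x0 y0 \<omega> s, \<omega> s))"
    by (simp add: st_Suc)
  show ?case unfolding eq by (rule measurable_compose[OF pr Smm])
qed

lemma st_bound: "\<exists>K. compact K \<and> (\<forall>\<omega>. (\<forall>i<s. \<omega> i \<in> Bset) \<longrightarrow> st x0 y0 \<omega> s \<in> K)"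
proof (induction s)
  case 0 show ?case by (rule exI[of _ "{(x0, y0)}"]) (simp add: st_0)
next
  case (Suc s)
  then obtain K where K: "compact K" "\<And>\<omega>. (\<forall>i<s. \<omega> i \<in> Bset) \<Longrightarrow> st x0 y0 \<omega> s \<in> K" by blast
  define K' where "K' = (\<lambda>q. Sm (fst q) (snd q)) ` (K \<times> Bset)"
  have cKB: "compact (K \<times> Bset)" by (rule compact_Times[OF K(1) Bset_compact])
  have "compact K'" unfolding K'_def
    by (rule compact_continuous_image[OF continuous_on_subset[OF Sm_cont subset_UNIV] cKB])
  moreover have "st x0 y0 \<omega> (Suc s) \<in> K'" if "\<forall>i<Suc s. \<omega> i \<in> Bset" for \<omega>
  proof -
    have "st x0 y0 \<omega> s \<in> K" using K(2) that by auto
    moreover have "\<omega> s \<in> Bset" using that by auto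
    ultimately show ?thesis unfolding K'_def st_Suc by (intro image_eqI[of _ _ "(st x0 y0 \<omega> s, \<omega> s)"]) auto
  qed
  ultimately show ?case by blast
qed

lemma integrable_st:
  fixes F :: "'a \<times> 'b \<Rightarrow> real"
  assumes F: "continuous_on UNIV F" and sJ: "{..<s} \<subseteq> J"
  shows "integrable (PiM J (\<lambda>_. Mw)) (\<lambda>\<omega>. F (st x0 y0 \<omega> s))"
proof -
  interpret prob_space "PiM J (\<lambda>_::nat. (Mw :: ('a \<times> 'b) measure))" by (rule PiM_prob)
  have "\<exists>K. compact K \<and> (\<forall>\<omega>. (\<forall>i<s. \<omega> i \<in> Bset) \<longrightarrow> st x0 y0 \<omega> s \<in> K)" by (rule st_bound)
  then obtain K where KK: "compact K \<and> (\<forall>\<omega>. (\<forall>i<s. \<omega> i \<in> Bset) \<longrightarrow> st x0 y0 \<omega> s \<in> K)" by (rule exE)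
  have K: "compact K" "\<And>\<omega>. (\<forall>i<s. \<omega> i \<in> Bset) \<Longrightarrow> st x0 y0 \<omega> s \<in> K" using KK by simp_all
  have "compact (F ` K)" by (rule compact_continuous_image[OF continuous_on_subset[OF F subset_UNIV] K(1)])
  then obtain B where B: "\<And>p. p \<in> K \<Longrightarrow> norm (F p) \<le> B"
    by (meson bounded_iff compact_imp_bounded imageI)
  show ?thesis
  proof (rule integrable_const_bound)
    have "AE \<omega> in PiM J (\<lambda>_. Mw). \<forall>i\<in>{..<s}. \<omega> i \<in> Bset" by (rule AE_PiM_Bset) (use sJ in auto)
    then show "AE \<omega> in PiM J (\<lambda>_. Mw). norm (F (st x0 y0 \<omega> s)) \<le> B"
    proof eventually_elim
      case (elim \<omega>)
      have "\<forall>i<s. \<omega> i \<in> Bset" using elim by blast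
      then have "st x0 y0 \<omega> s \<in> K" by (rule K(2))
      then show ?case by (rule B)
    qed
    show "(\<lambda>\<omega>. F (st x0 y0 \<omega> s)) \<in> borel_measurable (PiM J (\<lambda>_. Mw))"
      by (rule measurable_compose[OF st_meas[OF sJ] borel_measurable_continuous_onI[OF F]])
  qed
qed

end



context agda
begin

lemma Vf_cont: "continuous_on UNIV (\<lambda>p. Vf (fst p) (snd p))"
  unfolding Vf_def by (intro continuous_intros)

lemma Dst_cont2: "continuous_on UNIV (\<lambda>q. Dst (fst (fst q)) (snd (fst q)) (snd q))"
  unfolding Dst_def Vf_def xn_def yn_def ty_def sx_def using mu1_pos mu2_pos
  by (intro continuous_intros) auto

lemma gPhi_cont: "continuous_on UNIV (\<lambda>p::'a \<times> 'b. (norm (grad (Phi f) (fst p)))\<^sup>2)"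
  by (intro continuous_intros)

lemma main_ineq:
  fixes x0 :: 'a and y0 :: 'b and t :: nat
  defines "Vs \<equiv> (\<lambda>s \<omega>. Vf (fst (st x0 y0 \<omega> s)) (snd (st x0 y0 \<omega> s)))"
  shows "(\<integral>\<omega>. Vs t \<omega> \<partial>PiM UNIV (\<lambda>_. Mw)) - (\<integral>\<omega>. Vs (Suc t) \<omega> \<partial>PiM UNIV (\<lambda>_. Mw))
     \<ge> \<alpha> / 4 * (\<integral>\<omega>. (norm (grad (Phi f) (fst (st x0 y0 \<omega> t))))\<^sup>2 \<partial>PiM UNIV (\<lambda>_. Mw))
       - (5 * real DIM('a) * Lc + 3 / (2 * \<alpha>) + 3/2 * Lc + real DIM('b) * Lc) * (real DIM('a))\<^sup>2 * Lc\<^sup>2 * \<alpha>\<^sup>2 / 4 * \<mu>1\<^sup>2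
       - 3 * (real DIM('b))\<^sup>2 * Lc\<^sup>2 * \<beta> / 16 * \<mu>2\<^sup>2"
proof -
  define c where "c = (5 * real DIM('a) * Lc + 3 / (2 * \<alpha>) + 3/2 * Lc + real DIM('b) * Lc) * (real DIM('a))\<^sup>2 * Lc\<^sup>2 * \<alpha>\<^sup>2 / 4 * \<mu>1\<^sup>2
       + 3 * (real DIM('b))\<^sup>2 * Lc\<^sup>2 * \<beta> / 16 * \<mu>2\<^sup>2"
  define J where "J = {..<Suc t}"
  define I where "I = {..<t}"
  have JI: "J = insert t I" unfolding J_def I_def by auto
  define G where "G = (\<lambda>\<omega>. Vs t \<omega> - Vs (Suc t) \<omega>)"
  have Vsint: "integrable (PiM K (\<lambda>_. Mw)) (Vs s)" if "{..<s} \<subseteq> K" for s K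
    unfolding Vs_def by (rule integrable_st[OF Vf_cont that])
  have Vsm: "Vs s \<in> borel_measurable (PiM K (\<lambda>_. Mw))" if "{..<s} \<subseteq> K" for s K
    unfolding Vs_def
    by (rule measurable_compose[OF st_meas[OF that] borel_measurable_continuous_onI[OF Vf_cont]])
  have s1: "(\<integral>\<omega>. Vs t \<omega> \<partial>PiM UNIV (\<lambda>_. Mw)) - (\<integral>\<omega>. Vs (Suc t) \<omega> \<partial>PiM UNIV (\<lambda>_. Mw)) = (\<integral>\<omega>. G \<omega> \<partial>PiM UNIV (\<lambda>_. Mw))"
    unfolding G_def by (rule Bochner_Integration.integral_diff[symmetric]) (rule Vsint, simp)+
  have s2: "(\<integral>\<omega>. G \<omega> \<partial>PiM UNIV (\<lambda>_. Mw)) = (\<integral>\<omega>. G \<omega> \<partial>PiM J (\<lambda>_. Mw))"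
  proof (rule transfer_restrict)
    show "finite J" by (simp add: J_def)
    show "G (restrict \<omega> J) = G \<omega>" for \<omega>
      unfolding G_def Vs_def J_def by (subst st_restrict, auto)+
    show "G \<in> borel_measurable (PiM J (\<lambda>_. Mw))"
      unfolding G_def by (intro borel_measurable_diff Vsm) (auto simp: J_def)
  qed
  have iG: "integrable (PiM J (\<lambda>_. Mw)) G"
    unfolding G_def by (intro Bochner_Integration.integrable_diff Vsint) (auto simp: J_def)
  have s3: "(\<integral>\<omega>. G \<omega> \<partial>PiM J (\<lambda>_. Mw)) = (\<integral>\<omega>. (\<integral>w. G (fun_upd \<omega> t w) \<partial>Mw) \<partial>PiM I (\<lambda>_. Mw))"
    unfolding JI
    by (rule product_sigma_finite.product_integral_insert[OF Mw_product_sf]) (use iG JI in \<open>auto simp: I_def\<close>)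
  define h where "h = (\<lambda>\<omega>. \<integral>w. Dst (fst (st x0 y0 \<omega> t)) (snd (st x0 y0 \<omega> t)) w \<partial>(Mw :: ('a \<times> 'b) measure))"
  have Geq: "G (fun_upd \<omega> t w) = Dst (fst (st x0 y0 \<omega> t)) (snd (st x0 y0 \<omega> t)) w" for \<omega> w
  proof -
    have e: "st x0 y0 (fun_upd \<omega> t w) t = st x0 y0 \<omega> t" by (rule st_local) auto
    show ?thesis unfolding G_def Vs_def st_Suc e Dst_def Sm_def by simp
  qed
  have s3': "(\<integral>\<omega>. G \<omega> \<partial>PiM J (\<lambda>_. Mw)) = (\<integral>\<omega>. h \<omega> \<partial>PiM I (\<lambda>_. Mw))"
    unfolding s3 h_def Geq ..
  define R where "R = (\<lambda>\<omega>. \<alpha> / 4 * (norm (grad (Phi f) (fst (st x0 y0 \<omega> t))))\<^sup>2 - c)"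
  have hR: "R \<omega> \<le> h \<omega>" for \<omega>
    unfolding R_def h_def c_def using one_step[of "fst (st x0 y0 \<omega> t)" "snd (st x0 y0 \<omega> t)"] by simp
  have iR: "integrable (PiM I (\<lambda>_. Mw)) R"
  proof -
    interpret prob_space "PiM I (\<lambda>_::nat. (Mw :: ('a \<times> 'b) measure))" by (rule PiM_prob)
    have "integrable (PiM I (\<lambda>_. Mw)) (\<lambda>\<omega>. (norm (grad (Phi f) (fst (st x0 y0 \<omega> t))))\<^sup>2)"
      by (rule integrable_st[OF gPhi_cont]) (simp add: I_def)
    then show ?thesis unfolding R_def by simp
  qed
  have ih: "integrable (PiM I (\<lambda>_. Mw)) h"
  proof -
    interpret P: prob_space "PiM I (\<lambda>_::nat. (Mw :: ('a \<times> 'b) measure))" by (rule PiM_prob)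
    interpret W: prob_space "Mw :: ('a \<times> 'b) measure" by (rule Mw_prob)
    define hD where "hD = (\<lambda>p::'a \<times> 'b. \<integral>w. Dst (fst p) (snd p) w \<partial>(Mw :: ('a \<times> 'b) measure))"
    have hh: "h = (\<lambda>\<omega>. hD (st x0 y0 \<omega> t))" unfolding h_def hD_def ..
    have "sets (borel \<Otimes>\<^sub>M (Mw :: ('a \<times> 'b) measure)) = sets (borel \<Otimes>\<^sub>M (borel :: ('a \<times> 'b) measure))"
      by (rule sets_pair_measure_cong[OF refl sets_sphere_pair])
    also have "\<dots> = sets (borel :: (('a \<times> 'b) \<times> ('a \<times> 'b)) measure)" by (subst borel_prod) rule
    finally have se: "sets (borel \<Otimes>\<^sub>M (Mw :: ('a \<times> 'b) measure)) = sets (borel :: (('a \<times> 'b) \<times> ('a \<times> 'b)) measure)" .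
    have "(\<lambda>q. Dst (fst (fst q)) (snd (fst q)) (snd q)) \<in> borel_measurable (borel :: (('a \<times> 'b) \<times> ('a \<times> 'b)) measure)"
      by (rule borel_measurable_continuous_onI[OF Dst_cont2])
    then have m2: "(\<lambda>(p, w). Dst (fst p) (snd p) w) \<in> borel_measurable (borel \<Otimes>\<^sub>M (Mw :: ('a \<times> 'b) measure))"
      unfolding measurable_cong_sets[OF se refl] by (simp add: case_prod_beta')
    have hDm: "hD \<in> borel_measurable borel"
      unfolding hD_def using W.borel_measurable_lebesgue_integral[OF m2] .
    have "\<exists>K. compact K \<and> (\<forall>\<omega>. (\<forall>i<t. \<omega> i \<in> Bset) \<longrightarrow> st x0 y0 \<omega> t \<in> K)" by (rule st_bound)
    then obtain K where KK: "compact K \<and> (\<forall>\<omega>. (\<forall>i<t. \<omega> i \<in> Bset) \<longrightarrow> st x0 y0 \<omega> t \<in> K)" by (rule exE)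
    have cKB: "compact (K \<times> Bset)" using KK Bset_compact by (intro compact_Times) auto
    have "compact ((\<lambda>q. Dst (fst (fst q)) (snd (fst q)) (snd q)) ` (K \<times> Bset))"
      by (rule compact_continuous_image[OF continuous_on_subset[OF Dst_cont2 subset_UNIV] cKB])
    then obtain Bd where Bd: "\<And>q. q \<in> K \<times> Bset \<Longrightarrow> norm (Dst (fst (fst q)) (snd (fst q)) (snd q)) \<le> Bd"
      by (meson bounded_iff compact_imp_bounded imageI)
    have hDb: "norm (hD p) \<le> Bd" if "p \<in> K" for p
    proof -
      have ip: "integrable Mw (Dst (fst p) (snd p))" by (rule integrable_pair_cont[OF Dst_cont])
      have ae: "AE w in (Mw :: ('a \<times> 'b) measure). norm (Dst (fst p) (snd p) w) \<le> Bd"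
        using AE_Bset by eventually_elim (use Bd[of "(p, _)"] that in auto)
      have ae1: "AE w in (Mw :: ('a \<times> 'b) measure). Dst (fst p) (snd p) w \<le> Bd"
        using ae by eventually_elim (auto simp: abs_le_iff)
      have ae2: "AE w in (Mw :: ('a \<times> 'b) measure). - Bd \<le> Dst (fst p) (snd p) w"
        using ae by eventually_elim (auto simp: abs_le_iff)
      have "hD p \<le> Bd" unfolding hD_def by (rule W.integral_le_const[OF ip ae1])
      moreover have "- Bd \<le> hD p" unfolding hD_def by (rule W.integral_ge_const[OF ip ae2])
      ultimately show ?thesis by simp
    qed
    show ?thesis unfolding hh
    proof (rule P.integrable_const_bound)
      have "AE \<omega> in PiM I (\<lambda>_. Mw). \<forall>i\<in>{..<t}. \<omega> i \<in> Bset" by (rule AE_PiM_Bset) (auto simp: I_def)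
      then show "AE \<omega> in PiM I (\<lambda>_. Mw). norm (hD (st x0 y0 \<omega> t)) \<le> Bd"
      proof eventually_elim
        case (elim \<omega>)
        then have "st x0 y0 \<omega> t \<in> K" using KK by blast
        then show ?case by (rule hDb)
      qed
      show "(\<lambda>\<omega>. hD (st x0 y0 \<omega> t)) \<in> borel_measurable (PiM I (\<lambda>_. Mw))"
        by (rule measurable_compose[OF st_meas hDm]) (simp add: I_def)
    qed
  qed
  have s4: "(\<integral>\<omega>. h \<omega> \<partial>PiM I (\<lambda>_. Mw)) \<ge> (\<integral>\<omega>. R \<omega> \<partial>PiM I (\<lambda>_. Mw))"
    by (rule integral_mono[OF iR ih hR])
  have s5: "(\<integral>\<omega>. R \<omega> \<partial>PiM I (\<lambda>_. Mw)) = \<alpha> / 4 * (\<integral>\<omega>. (norm (grad (Phi f) (fst (st x0 y0 \<omega> t))))\<^sup>2 \<partial>PiM I (\<lambda>_. Mw)) - c"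
  proof -
    interpret P: prob_space "PiM I (\<lambda>_::nat. (Mw :: ('a \<times> 'b) measure))" by (rule PiM_prob)
    have i: "integrable (PiM I (\<lambda>_. Mw)) (\<lambda>\<omega>. (norm (grad (Phi f) (fst (st x0 y0 \<omega> t))))\<^sup>2)"
      by (rule integrable_st[OF gPhi_cont]) (simp add: I_def)
    have "P.prob (space (PiM I (\<lambda>_. Mw))) = 1" by (rule P.prob_space)
    then show ?thesis unfolding R_def using i by simp
  qed
  have s6: "(\<integral>\<omega>. (norm (grad (Phi f) (fst (st x0 y0 \<omega> t))))\<^sup>2 \<partial>PiM UNIV (\<lambda>_. Mw))
      = (\<integral>\<omega>. (norm (grad (Phi f) (fst (st x0 y0 \<omega> t))))\<^sup>2 \<partial>PiM I (\<lambda>_. Mw))"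
  proof (rule transfer_restrict)
    show "finite I" by (simp add: I_def)
    show "(norm (grad (Phi f) (fst (st x0 y0 (restrict \<omega> I) t))))\<^sup>2 = (norm (grad (Phi f) (fst (st x0 y0 \<omega> t))))\<^sup>2" for \<omega>
      by (subst st_restrict) (auto simp: I_def)
    show "(\<lambda>\<omega>. (norm (grad (Phi f) (fst (st x0 y0 \<omega> t))))\<^sup>2) \<in> borel_measurable (PiM I (\<lambda>_. Mw))"
      by (rule measurable_compose[OF st_meas borel_measurable_continuous_onI[OF gPhi_cont]]) (simp add: I_def)
  qed
  have s5': "(\<integral>\<omega>. R \<omega> \<partial>PiM I (\<lambda>_. Mw)) = \<alpha> / 4 * (\<integral>\<omega>. (norm (grad (Phi f) (fst (st x0 y0 \<omega> t))))\<^sup>2 \<partial>PiM UNIV (\<lambda>_. Mw)) - c"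
    unfolding s6 by (rule s5)
  have fin: "(\<integral>\<omega>. Vs t \<omega> \<partial>PiM UNIV (\<lambda>_. Mw)) - (\<integral>\<omega>. Vs (Suc t) \<omega> \<partial>PiM UNIV (\<lambda>_. Mw))
     \<ge> \<alpha> / 4 * (\<integral>\<omega>. (norm (grad (Phi f) (fst (st x0 y0 \<omega> t))))\<^sup>2 \<partial>PiM UNIV (\<lambda>_. Mw)) - c"
    using s1 s2 s3' s4 s5' by linarith
  then show ?thesis unfolding c_def by argo
qed

end



theorem lemma4:
  fixes f :: "'a::euclidean_space \<Rightarrow> 'b::euclidean_space \<Rightarrow> real"
    and \<mu> l \<alpha> \<beta> \<mu>1 \<mu>2 :: real and x0 :: 'a and y0 :: 'b and t :: nat
  defines "d1 \<equiv> real DIM('a)" and "d2 \<equiv> real DIM('b)"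
    and "\<kappa> \<equiv> l / \<mu>" and "L \<equiv> l + l\<^sup>2 / (2 * \<mu>)"
  assumes diff_x: "\<And>x y. (\<lambda>x'. f x' y) differentiable (at x)"
    and diff_y: "\<And>x y. (\<lambda>y'. f x y') differentiable (at y)"
    and max_attained: "\<And>x. \<exists>y. \<forall>y'. f x y' \<le> f x y"
    and mu_pos: "\<mu> > 0"
    and PL: "\<And>x y. (norm (grad (\<lambda>y'. f x y') y))\<^sup>2 \<ge> 2 * \<mu> * (Phi f x - f x y)"
    and l_pos: "l > 0"
    and lip_x: "\<And>x1 x2 y1 y2. norm (grad (\<lambda>x. f x y1) x1 - grad (\<lambda>x. f x y2) x2)
                   \<le> l * (norm (x1 - x2) + norm (y1 - y2))"
    and lip_y: "\<And>x1 x2 y1 y2. norm (grad (\<lambda>y. f x1 y) y1 - grad (\<lambda>y. f x2 y) y2)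
                   \<le> l * (norm (x1 - x2) + norm (y1 - y2))"
    and alpha_pos: "\<alpha> > 0" and beta_pos: "\<beta> > 0"
    and mu1_pos: "\<mu>1 > 0" and mu2_pos: "\<mu>2 > 0"
    and beta_le: "\<beta> \<le> 1 / (4 * d2 * L)"
    and alpha_le: "\<alpha> \<le> min (\<beta> / (32 * \<kappa>\<^sup>2)) (1 / (10 * d1 * L))"
  shows
    "(let xs = (\<lambda>\<omega> s. fst (zo_agda f \<alpha> \<beta> \<mu>1 \<mu>2 x0 y0 \<omega> s));
          ys = (\<lambda>\<omega> s. snd (zo_agda f \<alpha> \<beta> \<mu>1 \<mu>2 x0 y0 \<omega> s));
          V = (\<lambda>\<omega> s. 3/2 * Phi f (xs \<omega> s) - 1/2 * f (xs \<omega> s) (ys \<omega> s));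
          \<theta>1 = (5 * d1 * L + 3 / (2 * \<alpha>) + 3/2 * L + d2 * L) * d1\<^sup>2 * L\<^sup>2 * \<alpha>\<^sup>2
      in (\<integral>\<omega>. V \<omega> t \<partial>dir_space) - (\<integral>\<omega>. V \<omega> (Suc t) \<partial>dir_space)
         \<ge> \<alpha> / 4 * (\<integral>\<omega>. (norm (grad (Phi f) (xs \<omega> t)))\<^sup>2 \<partial>dir_space)
           - \<theta>1 / 4 * \<mu>1\<^sup>2 - 3 * d2\<^sup>2 * L\<^sup>2 * \<beta> / 16 * \<mu>2\<^sup>2)"
proof -
  interpret A: agda f \<mu> l \<alpha> \<beta> \<mu>1 \<mu>2
  proof (unfold_locales)
    show "\<beta> \<le> 1 / (4 * real DIM('b) * (l + l\<^sup>2 / (2 * \<mu>)))"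
      using beta_le unfolding d2_def L_def .
    show "\<alpha> \<le> min (\<beta> / (32 * (l / \<mu>)\<^sup>2)) (1 / (10 * real DIM('a) * (l + l\<^sup>2 / (2 * \<mu>))))"
      using alpha_le unfolding d1_def \<kappa>_def L_def .
  qed (use assms in auto)
  have m: "(\<integral>\<omega>. A.Vf (fst (A.st x0 y0 \<omega> t)) (snd (A.st x0 y0 \<omega> t)) \<partial>PiM UNIV (\<lambda>_. Mw))
      - (\<integral>\<omega>. A.Vf (fst (A.st x0 y0 \<omega> (Suc t))) (snd (A.st x0 y0 \<omega> (Suc t))) \<partial>PiM UNIV (\<lambda>_. Mw))
     \<ge> \<alpha> / 4 * (\<integral>\<omega>. (norm (grad (Phi f) (fst (A.st x0 y0 \<omega> t))))\<^sup>2 \<partial>PiM UNIV (\<lambda>_. Mw))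
       - (5 * real DIM('a) * A.Lc + 3 / (2 * \<alpha>) + 3/2 * A.Lc + real DIM('b) * A.Lc) * (real DIM('a))\<^sup>2 * A.Lc\<^sup>2 * \<alpha>\<^sup>2 / 4 * \<mu>1\<^sup>2
       - 3 * (real DIM('b))\<^sup>2 * A.Lc\<^sup>2 * \<beta> / 16 * \<mu>2\<^sup>2"
    by (rule A.main_ineq)
  show ?thesis
    using m unfolding Let_def A.st_def A.Vf_def A.Lc_def dir_space_def d1_def d2_def L_def
    by simp
qed

end
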